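(* Let $n\ge 3$, let $C=\bigcap_{i=1}^{m}\{x\in\mathbb{R}^n:\langle x,v_i\rangle\ge 0\}$ be a strictly convex good cone with $C\setminus\{0\}\subset\{x_n>0\}$ satisfying the smoothness criterion, and let $M=P^{\lambda}=(T^n\times P)/\Delta$ (the good contact toric manifold associated with $C$) and $N=P^{\tilde\lambda}=(T^{n-1}\times P)/\widetilde{\Delta}$ (the symplectic toric manifold associated with $P$). Then $M$ is a principal $S^1$-bundle over $N$, with projection \[d:M\to N,\qquad [t,p]\mapsto[\tilde t,p],\] where for $t=(e^{i\theta_1},\dots,e^{i\theta_n})\in T^n$, $\tilde t=(e^{i\theta_1},\dots,e^{i\theta_{n-1}})\in T^{n-1}$ is $t$ with the last coordinate dropped.
   Context: A good cone in $\mathbb{R}^n$ is a rational polyhedral cone $C=\bigcap_{i=1}^m\{x:\langle x,v_i\rangle\ge 0\}$ (inequalities minimal), with facets $F_i$ and primitive inward normals $v_i=(v_{i1},\dots,v_{in})\in\mathbb{Z}^n$, such that for $0<l<n$ every codimension-$l$ face is the intersection of exactly $l$ facets and the corresponding normals generate a rank-$l$ direct summand of $\mathbb{Z}^n$; strictly convex means $C$ contains no line. $P=C\cap\{x_n=1\}$, identified with $\{y\in\mathbb{R}^{n-1}:\langle y,\tilde v_i\rangle\ge -v_{in}\}$ where $\tilde v_i=(v_{i1},\dots,v_{i,n-1})$; its facets are $\widetilde{F}_i=F_i\cap P$. Smoothness criterion: $P$ is a Delzant polytope in $\mathbb{R}^{n-1}$ and each $\tilde v_i$ is primitive in $\mathbb{Z}^{n-1}$.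 $\Delta$ is the equivalence relation on $T^n\times P$: $(g,p)\Delta(h,q)$ iff $p=q$ and $g^{-1}h$ lies in the closed subgroup of $T^n=\mathbb{R}^n/\mathbb{Z}^n$ generated by the images of the lines $\mathbb{R}v_i$, $p\in\widetilde{F}_i$; $\widetilde{\Delta}$ is the analogous relation on $T^{n-1}\times P$ using the vectors $\tilde v_i$ in $T^{n-1}=\mathbb{R}^{n-1}/\mathbb{Z}^{n-1}$. Here $P^{\lambda}$ is $T^n$-equivariantly homeomorphic to the good contact toric manifold associated with $C$, and $P^{\tilde\lambda}$ to the symplectic toric manifold with Delzant polytope $P$. The $S^1$ acting is the last circle factor $\{(1,\dots,1,e^{i\theta})\}\subset T^n$, acting on the first factor. *)

theory Defs
  imports "HOL-Analysis.Analysis"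
begin

text \<open>R^n is modelled as (real^('k option)) with n = CARD('k) + 1;
 the last coordinate x_n is the coordinate indexed by None, and R^{n-1} = (real^'k)
 (coordinate Some j of R^n corresponds to coordinate j of R^{n-1}). The torus T^a = R^a/Z^a is realised as the set of
 vectors in (complex^'a) all of whose entries have modulus 1 (x mod Z^a corresponds
 to the vector with entries exp(2 pi i x_j)).\<close>

definition rv :: "(int^'a) \<Rightarrow> (real^'a)" where
  "rv w = (\<chi> j. real_of_int (w $ j))"

definition zsmul :: "int \<Rightarrow> (int^'a) \<Rightarrow> (int^'a)" where
  "zsmul c w = (\<chi> j. c * w $ j)"

definition primitive :: "(int^'a) \<Rightarrow> bool" where
  "primitive w \<longleftrightarrow> (\<forall>c u. w = zsmul c u \<longrightarrow> c = 1 \<or> c = -1)"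

definition zspan :: "(int^'a) set \<Rightarrow> (int^'a) set" where
  "zspan S = {(\<Sum>s\<in>S. zsmul (c s) s) | c. True}"

definition direct_summand :: "(int^'a) set \<Rightarrow> bool" where
  "direct_summand L \<longleftrightarrow> (\<exists>L'. 0 \<in> L' \<and> (\<forall>a\<in>L'. \<forall>b\<in>L'. a + b \<in> L' \<and> - a \<in> L')
      \<and> L \<inter> L' = {0} \<and> (\<forall>w. \<exists>a\<in>L. \<exists>b\<in>L'. w = a + b))"

definition zrank :: "(int^'a) set \<Rightarrow> nat" where
  "zrank S = dim (rv ` S)"

definition pcone :: "nat \<Rightarrow> (nat \<Rightarrow> (int^'n)) \<Rightarrow> (real^'n) set" where
  "pcone m v = {x. \<forall>i<m. 0 \<le> x \<bullet> rv (v i)}"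

definition cone_facet :: "nat \<Rightarrow> (nat \<Rightarrow> (int^'n)) \<Rightarrow> nat \<Rightarrow> (real^'n) set" where
  "cone_facet m v i = {x \<in> pcone m v. x \<bullet> rv (v i) = 0}"

definition good_cone :: "nat \<Rightarrow> (nat \<Rightarrow> (int^'n)) \<Rightarrow> bool" where
  "good_cone m v \<longleftrightarrow>
     (\<forall>i<m. primitive (v i)) \<and>
     (\<forall>i<m. pcone m v \<noteq> {x. \<forall>j<m. j \<noteq> i \<longrightarrow> 0 \<le> x \<bullet> rv (v j)}) \<and>
     (\<forall>F l. 0 < l \<and> l < CARD('n) \<and> F face_of pcone m v \<and> aff_dim F = int (CARD('n) - l) \<longrightarrow>
        (let I = {i. i < m \<and> F \<subseteq> cone_facet m v i} in
           card I = l \<and> F = {x \<in> pcone m v. \<forall>i\<in>I. x \<in> cone_facet m v i} \<and>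
           zrank (v ` I) = l \<and> direct_summand (zspan (v ` I))))"

definition strictly_convex :: "(real^'n) set \<Rightarrow> bool" where
  "strictly_convex C \<longleftrightarrow> (\<forall>x. x \<noteq> 0 \<longrightarrow> \<not> (x \<in> C \<and> - x \<in> C))"

definition vtil :: "(int^('k::finite option)) \<Rightarrow> (int^'k)" where
  "vtil w = (\<chi> j. w $ Some j)"

text \<open>P = C \<inter> {x_n = 1}, identified with a subset of R^{n-1}.\<close>
definition slice :: "nat \<Rightarrow> (nat \<Rightarrow> (int^('k::finite option))) \<Rightarrow> (real^'k) set" where
  "slice m v = {y. \<forall>i<m. - real_of_int (v i $ None) \<le> y \<bullet> rv (vtil (v i))}"

definition slice_facet :: "nat \<Rightarrow> (nat \<Rightarrow> (int^('k::finite option))) \<Rightarrow> nat \<Rightarrow> (real^'k) set" where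
  "slice_facet m v i = {y \<in> slice m v. y \<bullet> rv (vtil (v i)) = - real_of_int (v i $ None)}"

definition zbasis :: "('a \<Rightarrow> (int^'a)) \<Rightarrow> bool" where
  "zbasis u \<longleftrightarrow> (\<forall>w. \<exists>!c. w = (\<Sum>j\<in>UNIV. zsmul (c j) (u j)))"

text \<open>Delzant polytope in R^k: full-dimensional polytope which is simple (k edges at each
 vertex), rational (edges p + t u_j with u_j integral) and smooth (u_j a Z-basis).\<close>
definition delzant :: "(real^'k::finite) set \<Rightarrow> bool" where
  "delzant P \<longleftrightarrow> polytope P \<and> aff_dim P = int CARD('k) \<and>
     (\<forall>p. p extreme_point_of P \<longrightarrow>
        (\<exists>u::'k \<Rightarrow> (int^'k). zbasis u \<and>
           (\<forall>j. (P \<inter> {p + t *\<^sub>R rv (u j) | t. 0 \<le> t}) edge_of P) \<and>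
           inj (\<lambda>j. P \<inter> {p + t *\<^sub>R rv (u j) | t. 0 \<le> t}) \<and>
           {E. E edge_of P \<and> p \<in> E} = range (\<lambda>j. P \<inter> {p + t *\<^sub>R rv (u j) | t. 0 \<le> t})))"

definition smoothness_criterion :: "nat \<Rightarrow> (nat \<Rightarrow> (int^('k::finite option))) \<Rightarrow> bool" where
  "smoothness_criterion m v \<longleftrightarrow> delzant (slice m v) \<and> (\<forall>i<m. primitive (vtil (v i)))"

definition torus :: "(complex^'a) set" where
  "torus = {t. \<forall>j. norm (t $ j) = 1}"

definition tmul :: "(complex^'a) \<Rightarrow> (complex^'a) \<Rightarrow> (complex^'a)" where
  "tmul s t = (\<chi> j. s $ j * t $ j)"

definition tinv :: "(complex^'a) \<Rightarrow> (complex^'a)" where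
  "tinv t = (\<chi> j. inverse (t $ j))"

definition tone :: "(complex^'a)" where
  "tone = (\<chi> j. 1)"

text \<open>Image in T^a = R^a/Z^a of the line R w.\<close>
definition tline :: "(int^'a) \<Rightarrow> (complex^'a) set" where
  "tline w = {(\<chi> j. cis (2 * pi * s * real_of_int (w $ j))) | s. True}"

definition closed_subgroup_gen :: "(complex^'a) set \<Rightarrow> (complex^'a) set" where
  "closed_subgroup_gen S = \<Inter>{H. H \<subseteq> torus \<and> closed H \<and> tone \<in> H \<and>
      (\<forall>a\<in>H. \<forall>b\<in>H. tmul a b \<in> H \<and> tinv a \<in> H) \<and> S \<subseteq> H}"

definition tor_rel :: "nat \<Rightarrow> (nat \<Rightarrow> (int^'a)) \<Rightarrow> ('b set) \<Rightarrow> (nat \<Rightarrow> 'b set)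
    \<Rightarrow> (((complex^'a) \<times> 'b) \<times> ((complex^'a) \<times> 'b)) set" where
  "tor_rel m w P Fac = {((g, p), (h, q)). g \<in> torus \<and> h \<in> torus \<and> p \<in> P \<and> q = p \<and>
      tmul (tinv g) h \<in> closed_subgroup_gen (\<Union>i\<in>{i. i < m \<and> p \<in> Fac i}. tline (w i))}"

definition quotient_topology :: "'a topology \<Rightarrow> ('a \<times> 'a) set \<Rightarrow> 'a set topology" where
  "quotient_topology X R = topology (\<lambda>U. U \<subseteq> topspace X // R \<and> openin X (\<Union>U))"

text \<open>Map induced on equivalence classes: a class goes to the union of the classes of
 the images of its elements (a single class when the map is well defined).\<close>
definition induced_map :: "('b \<times> 'b) set \<Rightarrow> ('a \<Rightarrow> 'b) \<Rightarrow> 'a set \<Rightarrow> 'b set" where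
  "induced_map R f X = (\<Union>x\<in>X. R `` {f x})"

definition circle :: "complex set" where
  "circle = sphere 0 1"

definition principal_S1_bundle ::
   "'e topology \<Rightarrow> 'b topology \<Rightarrow> (complex \<Rightarrow> 'e \<Rightarrow> 'e) \<Rightarrow> ('e \<Rightarrow> 'b) \<Rightarrow> bool" where
  "principal_S1_bundle E B act d \<longleftrightarrow>
     continuous_map E B d \<and> d ` topspace E = topspace B \<and>
     continuous_map (prod_topology (top_of_set circle) E) E (\<lambda>(z, x). act z x) \<and>
     (\<forall>x\<in>topspace E. act 1 x = x) \<and>
     (\<forall>z\<in>circle. \<forall>w\<in>circle. \<forall>x\<in>topspace E. act (z * w) x = act z (act w x)) \<and>
     (\<forall>z\<in>circle. \<forall>x\<in>topspace E. d (act z x) = d x) \<and>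
     (\<forall>b\<in>topspace B. \<exists>U \<phi>. openin B U \<and> b \<in> U \<and>
        homeomorphic_map (subtopology E {x \<in> topspace E. d x \<in> U})
                         (prod_topology (subtopology B U) (top_of_set circle)) \<phi> \<and>
        (\<forall>x\<in>topspace E. d x \<in> U \<longrightarrow> fst (\<phi> x) = d x) \<and>
        (\<forall>z\<in>circle. \<forall>x\<in>topspace E. d x \<in> U \<longrightarrow> snd (\<phi> (act z x)) = z * snd (\<phi> x)))"

definition rel_M :: "nat \<Rightarrow> (nat \<Rightarrow> (int^('k::finite option)))
    \<Rightarrow> (((complex^('k option)) \<times> (real^'k)) \<times> ((complex^('k option)) \<times> (real^'k))) set" where
  "rel_M m v = tor_rel m v (slice m v) (slice_facet m v)"

definition rel_N :: "nat \<Rightarrow> (nat \<Rightarrow> (int^('k::finite option)))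
    \<Rightarrow> (((complex^'k) \<times> (real^'k)) \<times> ((complex^'k) \<times> (real^'k))) set" where
  "rel_N m v = tor_rel m (\<lambda>i. vtil (v i)) (slice m v) (slice_facet m v)"

definition space_M :: "nat \<Rightarrow> (nat \<Rightarrow> (int^('k::finite option))) \<Rightarrow> ((complex^('k option)) \<times> (real^'k)) set topology" where
  "space_M m v = quotient_topology (top_of_set (torus \<times> slice m v)) (rel_M m v)"

definition space_N :: "nat \<Rightarrow> (nat \<Rightarrow> (int^('k::finite option))) \<Rightarrow> ((complex^'k) \<times> (real^'k)) set topology" where
  "space_N m v = quotient_topology (top_of_set (torus \<times> slice m v)) (rel_N m v)"

definition ttil :: "(complex^('k::finite option)) \<Rightarrow> (complex^'k)" where
  "ttil t = (\<chi> j. t $ Some j)"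

definition proj_d :: "nat \<Rightarrow> (nat \<Rightarrow> (int^('k::finite option)))
    \<Rightarrow> ((complex^('k option)) \<times> (real^'k)) set \<Rightarrow> ((complex^'k) \<times> (real^'k)) set" where
  "proj_d m v = induced_map (rel_N m v) (\<lambda>(t, p). (ttil t, p))"

definition last_circle :: "complex \<Rightarrow> (complex^('k::finite option))" where
  "last_circle z = (\<chi> j. if j = None then z else 1)"

definition act_M :: "nat \<Rightarrow> (nat \<Rightarrow> (int^('k::finite option)))
    \<Rightarrow> complex \<Rightarrow> ((complex^('k option)) \<times> (real^'k)) set \<Rightarrow> ((complex^('k option)) \<times> (real^'k)) set" where
  "act_M m v z = induced_map (rel_M m v) (\<lambda>(t, p). (tmul (last_circle z) t, p))"

end

theory Submission
  imports Defs
begin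

definition emb :: "real^'k \<Rightarrow> real^('k::finite option)" where
  "emb q = (\<chi> j. case j of None \<Rightarrow> 1 | Some l \<Rightarrow> q $ l)"

definition prj :: "real^('k::finite option) \<Rightarrow> real^'k" where
  "prj x = (\<chi> l. x $ Some l)"

lemma sum_option: "(\<Sum>j\<in>(UNIV::'k::finite option set). f j) = f None + (\<Sum>l\<in>UNIV. f (Some l))"
proof -
  have "sum f (insert None (range Some)) = f None + (\<Sum>l\<in>UNIV. f (Some l))"
    by (simp add: sum.reindex)
  then show ?thesis by (simp only: UNIV_option_conv[symmetric])
qed

lemma prod_option: "(\<Prod>j\<in>(UNIV::'k::finite option set). f j) = f None * (\<Prod>l\<in>UNIV. f (Some l))"
proof -
  have "prod f (insert None (range Some)) = f None * (\<Prod>l\<in>UNIV. f (Some l))"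
    by (simp add: prod.reindex)
  then show ?thesis by (simp only: UNIV_option_conv[symmetric])
qed

lemma dot_split:
  fixes x :: "real^('k::finite option)" and w :: "int^('k option)"
  shows "x \<bullet> rv w = prj x \<bullet> rv (vtil w) + x $ None * real_of_int (w $ None)"
  by (simp add: inner_vec_def sum_option rv_def vtil_def prj_def)

lemma prj_emb[simp]: "prj (emb q) = q" by (simp add: prj_def emb_def vec_eq_iff)
lemma emb_None[simp]: "emb q $ None = 1" by (simp add: emb_def)
lemma prj_zero[simp]: "prj 0 = 0" by (simp add: prj_def vec_eq_iff)
lemma emb_Some[simp]: "emb q $ Some l = q $ l" by (simp add: emb_def)

lemma emb_dot: "emb q \<bullet> rv w = q \<bullet> rv (vtil w) + real_of_int (w $ None)"
  by (simp add: dot_split)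

lemma emb_in_pcone: "emb q \<in> pcone m v \<longleftrightarrow> q \<in> slice m v"
  by (auto simp: pcone_def slice_def emb_dot)

lemma emb_comb: "u + w = 1 \<Longrightarrow> u *\<^sub>R emb x + w *\<^sub>R emb y = emb (u *\<^sub>R x + w *\<^sub>R y)"
  by (auto simp: emb_def vec_eq_iff split: option.splits)

lemma prj_scale: "prj (c *\<^sub>R x) = c *\<^sub>R prj x" by (simp add: prj_def vec_eq_iff)

lemma decomp:
  fixes x :: "real^('k::finite option)"
  assumes "x $ None \<noteq> 0"
  shows "x = (x $ None) *\<^sub>R emb (prj x /\<^sub>R x $ None)"
  using assms by (auto simp: vec_eq_iff emb_def prj_def split: option.splits)

lemma decomp_in_slice:
  fixes x :: "real^('k::finite option)"
  assumes "x \<in> pcone m v" "x $ None > 0"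
  shows "prj x /\<^sub>R x $ None \<in> slice m v"
proof -
  have "x = (x $ None) *\<^sub>R emb (prj x /\<^sub>R x $ None)" using decomp assms by force
  then have "\<forall>i<m. 0 \<le> (x $ None) * (emb (prj x /\<^sub>R x $ None) \<bullet> rv (v i))"
    using assms(1) unfolding pcone_def by (metis (mono_tags, lifting) inner_scaleR_left mem_Collect_eq)
  then have "\<forall>i<m. 0 \<le> emb (prj x /\<^sub>R x $ None) \<bullet> rv (v i)"
    using assms(2) by (simp add: zero_le_mult_iff)
  then show ?thesis using emb_in_pcone unfolding pcone_def by blast
qed

lemma cone_face:
  fixes v :: "nat \<Rightarrow> int^('k::finite option)"
  assumes pos: "\<forall>x\<in>pcone m v. x \<noteq> 0 \<longrightarrow> x $ None > 0"
    and G: "G face_of slice m v"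
  shows "conic hull (emb ` G) face_of pcone m v"
  unfolding face_of_def
proof (intro conjI ballI impI)
  have GP: "G \<subseteq> slice m v" using G face_of_imp_subset by blast
  show "conic hull emb ` G \<subseteq> pcone m v"
  proof
    fix x assume "x \<in> conic hull emb ` G"
    then obtain c q where x: "x = c *\<^sub>R emb q" "0 \<le> c" "q \<in> G" by (auto simp: conic_hull_explicit)
    then have "emb q \<in> pcone m v" using GP emb_in_pcone by blast
    then show "x \<in> pcone m v" using x by (auto simp: pcone_def)
  qed
  have "convex (emb ` G)"
    using face_of_imp_convex[OF G] unfolding convex_def
    by (auto simp: emb_comb intro!: imageI)
  then show "convex (conic hull emb ` G)" by (rule convex_conic_hull)
  show "a \<in> conic hull emb ` G" "b \<in> conic hull emb ` G"
    if a: "a \<in> pcone m v" and b: "b \<in> pcone m v" and z: "z \<in> conic hull emb ` G"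
       and zs: "z \<in> open_segment a b" for a b z
  proof -
    have main: "a \<in> conic hull emb ` G"
      if a: "a \<in> pcone m v" and b: "b \<in> pcone m v" and z: "z \<in> conic hull emb ` G"
       and zs: "z = (1 - u) *\<^sub>R a + u *\<^sub>R b" and u: "0 < u" "u < 1" for a b z u
    proof (cases "a = 0")
      case True then show ?thesis using z by (auto simp: conic_hull_explicit)
    next
      case False
      then have an: "a $ None > 0" using pos a by blast
      have bn: "b $ None \<ge> 0" using pos b by (cases "b = 0") force+
      obtain c q where zc: "z = c *\<^sub>R emb q" "0 \<le> c" "q \<in> G" using z by (auto simp: conic_hull_explicit)
      define qa where "qa = prj a /\<^sub>R a $ None"
      have qa: "qa \<in> slice m v" using decomp_in_slice a an qa_def by blast
      have aeq: "a = a $ None *\<^sub>R emb qa" using decomp an qa_def by force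
      have zn: "c = (1-u) * a $ None + u * b $ None" using zc zs by (simp add: vec_eq_iff)
      have cpos: "c > 0" using zn an bn u by (smt (verit) mult_nonneg_nonneg mult_pos_pos)
      have zp: "c *\<^sub>R q = (1-u) *\<^sub>R prj a + u *\<^sub>R prj b"
        using arg_cong[OF zs, of prj] zc by (simp add: prj_def vec_eq_iff)
      show ?thesis
      proof (cases "b = 0")
        case True
        then have "c *\<^sub>R q = ((1-u) * a $ None) *\<^sub>R qa" using zp an by (simp add: qa_def)
        moreover have "c = (1-u) * a $ None" using zn True by simp
        ultimately have "q = qa" using cpos u an by auto
        then show ?thesis using aeq zc an by (auto simp: conic_hull_explicit intro!: exI[of _ "a $ None"])
      next
        case False
        then have bn: "b $ None > 0" using pos b by blast
        define qb where "qb = prj b /\<^sub>R b $ None"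
        have qb: "qb \<in> slice m v" using decomp_in_slice b bn qb_def by blast
        define s where "s = u * b $ None / c"
        have h: "0 < (1-u) * a $ None" using u an by simp
        have s: "0 < s" "s < 1" using u bn cpos h zn by (auto simp: s_def)
        have "q = (1 - s) *\<^sub>R qa + s *\<^sub>R qb"
        proof -
          have eq: "c *\<^sub>R q = ((1-u) * a $ None) *\<^sub>R qa + (u * b $ None) *\<^sub>R qb"
            using zp an bn by (simp add: qa_def qb_def mult.assoc less_imp_neq[symmetric])
          have "q = (1/c) *\<^sub>R (c *\<^sub>R q)" using cpos by simp
          also have "\<dots> = ((1-u) * a $ None / c) *\<^sub>R qa + (u * b $ None / c) *\<^sub>R qb"
            unfolding eq by (simp add: scaleR_right_distrib)
          also have "(1-u) * a $ None / c = 1 - s" using zn cpos by (simp add: s_def field_simps)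
          finally show ?thesis by (simp add: s_def)
        qed
        then have "qa \<in> G"
          using face_ofD[OF G, of q qa qb] s qa qb zc(3) by (cases "qa = qb") (auto simp: in_segment)
        then show ?thesis using aeq an by (auto simp: conic_hull_explicit intro!: exI[of _ "a $ None"])
      qed
    qed
    obtain u where u: "a \<noteq> b" "0 < u" "u < 1" "z = (1 - u) *\<^sub>R a + u *\<^sub>R b" using zs by (auto simp: in_segment)
    show "a \<in> conic hull emb ` G" using main[OF a b z u(4) u(2,3)] .
    show "b \<in> conic hull emb ` G" using main[OF b a z _ , of "1-u"] u by (simp add: add.commute)
  qed
qed

definition idot :: "int^'a \<Rightarrow> int^'a \<Rightarrow> int" where
  "idot a b = (\<Sum>l\<in>UNIV. a $ l * b $ l)"

lemma idot_comm: "idot a b = idot b a" by (simp add: idot_def mult.commute)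

lemma idot_zsmul: "idot a (zsmul c b) = c * idot a b"
  by (simp add: idot_def zsmul_def sum_distrib_left mult_ac)

lemma idot_sum: "idot a (sum f S) = (\<Sum>s\<in>S. idot a (f s))"
  by (induction S rule: infinite_finite_induct) (auto simp: idot_def sum.distrib algebra_simps)

lemma idot_unit: "idot a (\<chi> l'. if l' = l then 1 else 0) = a $ l"
  by (simp add: idot_def if_distrib cong: if_cong)

lemma idot_self_zero: "idot a a = 0 \<Longrightarrow> a = 0"
proof -
  assume h: "idot a a = 0"
  have "\<forall>l\<in>UNIV. a $ l * a $ l = 0"
    using h unfolding idot_def by (subst (asm) sum_nonneg_eq_0_iff) auto
  then show "a = 0" by (simp add: vec_eq_iff)
qed

lemma not_primitive_zero: "\<not> primitive (0::int^'a)"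
  unfolding primitive_def by (auto intro!: exI[of _ 2] exI[of _ 0] simp: zsmul_def vec_eq_iff)

lemma lattice_solve:
  fixes I :: "nat set" and w :: "nat \<Rightarrow> int^'k::finite" and u :: "'k \<Rightarrow> int^'k" and c :: "nat \<Rightarrow> int"
  assumes fin: "finite I" and cardI: "card I = CARD('k)" and zb: "zbasis u"
    and prim: "\<forall>i\<in>I. primitive (w i)"
    and col: "\<forall>j. CARD('k) \<le> card {i\<in>I. idot (w i) (u j) = 0} + 1"
  shows "\<exists>b. \<forall>i\<in>I. idot b (w i) = c i"
proof -
  define A where "A i j = idot (w i) (u j)" for i j
  have colu: "i = i'" if "i \<in> I" "i' \<in> I" "A i j \<noteq> 0" "A i' j \<noteq> 0" for i i' j
  proof -
    have "{i\<in>I. A i j \<noteq> 0} = I - {i\<in>I. idot (w i) (u j) = 0}" by (auto simp: A_def)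
    then have "card {i\<in>I. A i j \<noteq> 0} = card I - card {i\<in>I. idot (w i) (u j) = 0}"
      using fin by (simp add: card_Diff_subset)
    moreover have "CARD('k) \<le> card {i\<in>I. idot (w i) (u j) = 0} + 1" using col by blast
    ultimately have "card {i\<in>I. A i j \<noteq> 0} \<le> 1" using cardI by linarith
    then show ?thesis using that fin by (auto simp: card_le_Suc0_iff_eq)
  qed
  have row: "\<exists>j. A i j \<noteq> 0" if "i \<in> I" for i
  proof (rule ccontr)
    assume "\<not> ?thesis"
    then have z: "\<forall>j. A i j = 0" by auto
    obtain cc where "w i = (\<Sum>j\<in>UNIV. zsmul (cc j) (u j))" using zb unfolding zbasis_def by metis
    then have "idot (w i) (w i) = (\<Sum>j\<in>UNIV. cc j * A i j)" by (simp add: idot_sum idot_zsmul A_def)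
    then have "w i = 0" using z idot_self_zero by simp
    then show False using prim that not_primitive_zero by metis
  qed
  define \<sigma> where "\<sigma> i = (SOME j. A i j \<noteq> 0)" for i
  have sig: "A i (\<sigma> i) \<noteq> 0" if "i \<in> I" for i using row[OF that] unfolding \<sigma>_def by (rule someI_ex)
  have inj: "inj_on \<sigma> I"
  proof (rule inj_onI)
    fix x y assume xy: "x \<in> I" "y \<in> I" "\<sigma> x = \<sigma> y"
    show "x = y" using colu[OF xy(1,2), of "\<sigma> x"] sig[OF xy(1)] sig[OF xy(2)] xy(3) by simp
  qed
  have surj: "\<sigma> ` I = UNIV"
    using card_subset_eq[of UNIV "\<sigma> ` I"] card_image[OF inj] cardI by simp
  have rowu: "j = \<sigma> i" if "i \<in> I" "A i j \<noteq> 0" for i j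
  proof -
    obtain i' where "i' \<in> I" "j = \<sigma> i'" using surj by (metis UNIV_I imageE)
    then show ?thesis using colu[OF that(1) \<open>i' \<in> I\<close> that(2)] sig[OF \<open>i' \<in> I\<close>] by simp
  qed
  have unit: "A i (\<sigma> i) = 1 \<or> A i (\<sigma> i) = -1" if "i \<in> I" for i
  proof -
    have "\<forall>l. \<exists>cc. (\<chi> l'. if l' = l then 1 else 0) = (\<Sum>j\<in>UNIV. zsmul (cc j) (u j))"
      using zb unfolding zbasis_def by metis
    then obtain C where C: "\<And>l. (\<chi> l'. if l' = l then 1 else 0) = (\<Sum>j\<in>UNIV. zsmul (C l j) (u j))"
      by metis
    have "w i $ l = C l (\<sigma> i) * A i (\<sigma> i)" for l
    proof -
      have "w i $ l = idot (w i) (\<chi> l'. if l' = l then 1 else 0)" by (simp add: idot_unit)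
      also have "\<dots> = (\<Sum>j\<in>UNIV. C l j * A i j)" by (simp add: C[of l] idot_sum idot_zsmul A_def)
      also have "\<dots> = (\<Sum>j\<in>UNIV. if j = \<sigma> i then C l j * A i j else 0)"
        by (rule sum.cong) (auto dest: rowu[OF that])
      also have "\<dots> = C l (\<sigma> i) * A i (\<sigma> i)" by simp
      finally show ?thesis .
    qed
    then have "w i = zsmul (A i (\<sigma> i)) (\<chi> l. C l (\<sigma> i))" by (simp add: zsmul_def vec_eq_iff mult.commute)
    then show ?thesis using prim that unfolding primitive_def by blast
  qed
  define b where "b = (\<Sum>i\<in>I. zsmul (c i * A i (\<sigma> i)) (u (\<sigma> i)))"
  have "idot b (w i') = c i'" if "i' \<in> I" for i'
  proof -
    have "idot b (w i') = (\<Sum>i\<in>I. c i * A i (\<sigma> i) * A i' (\<sigma> i))"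
      by (simp add: b_def idot_comm[of _ "w i'"] idot_sum idot_zsmul A_def)
    also have "\<dots> = c i' * A i' (\<sigma> i') * A i' (\<sigma> i')"
    proof -
      have "(\<Sum>i\<in>I. c i * A i (\<sigma> i) * A i' (\<sigma> i)) = (\<Sum>i\<in>I. if i = i' then c i * A i (\<sigma> i) * A i' (\<sigma> i) else 0)"
      proof (rule sum.cong)
        fix i assume i: "i \<in> I"
        show "c i * A i (\<sigma> i) * A i' (\<sigma> i) = (if i = i' then c i * A i (\<sigma> i) * A i' (\<sigma> i) else 0)"
        proof (cases "A i' (\<sigma> i) = 0")
          case False
          then have "\<sigma> i = \<sigma> i'" using rowu[OF that] by simp
          then have "i = i'" using inj i that by (meson inj_onD)
          then show ?thesis by simp
        qed auto
      qed simp
      also have "\<dots> = c i' * A i' (\<sigma> i') * A i' (\<sigma> i')" using fin that by simp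
      finally show ?thesis .
    qed
    also have "\<dots> = c i'" using unit[OF that] by auto
    finally show ?thesis .
  qed
  then show ?thesis by blast
qed

lemma card_opt: "CARD('k::finite option) = Suc CARD('k)"
proof -
  have "card (insert None (range (Some :: 'k \<Rightarrow> 'k option))) = Suc CARD('k)"
    by (simp add: card_image)
  then show ?thesis by (simp only: UNIV_option_conv[symmetric])
qed

lemma rv_inner: "rv a \<bullet> rv b = real_of_int (idot a b)"
  by (simp add: inner_vec_def rv_def idot_def)

lemma aff_dim_span:
  fixes S T :: "'a::euclidean_space set"
  assumes "0 \<in> S" "span S = span T" "independent T"
  shows "aff_dim S = int (card T)"
proof -
  have "aff_dim S = int (dim S)" by (rule aff_dim_zero) (use assms in \<open>auto intro: hull_inc\<close>)
  also have "dim S = dim (span S)" by simp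
  also have "\<dots> = dim T" using assms(2) by simp
  also have "\<dots> = card T" using assms(3) by (rule dim_eq_card_independent)
  finally show ?thesis .
qed

lemma emb_cone_facet: "emb q \<in> cone_facet m v i \<longleftrightarrow> q \<in> slice_facet m v i"
  by (auto simp: cone_facet_def slice_facet_def emb_in_pcone emb_dot)

lemma cone_facet_scale: "x \<in> cone_facet m v i \<Longrightarrow> 0 \<le> c \<Longrightarrow> c *\<^sub>R x \<in> cone_facet m v i"
  by (auto simp: cone_facet_def pcone_def)

lemma good_cone_card:
  fixes v :: "nat \<Rightarrow> int^('k::finite option)"
  assumes gc: "good_cone m v" and l: "0 < l" "l < CARD('k option)"
    and F: "F face_of pcone m v" "aff_dim F = int (CARD('k option) - l)"
  shows "card {i. i < m \<and> F \<subseteq> cone_facet m v i} = l"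
  using gc l F unfolding good_cone_def Let_def by blast

lemma vertex_solve:
  fixes m :: nat and v :: "nat \<Rightarrow> int^('k::finite option)"
  assumes card2: "CARD('k) \<ge> 2"
    and gc: "good_cone m v"
    and pos: "\<forall>x\<in>pcone m v. x \<noteq> 0 \<longrightarrow> x $ None > 0"
    and sm: "smoothness_criterion m v"
    and p0: "p0 extreme_point_of slice m v"
  shows "\<exists>b::int^'k. \<forall>i<m. p0 \<in> slice_facet m v i \<longrightarrow> idot b (vtil (v i)) = - v i $ None"
proof -
  have dz: "delzant (slice m v)" and prim: "\<forall>i<m. primitive (vtil (v i))"
    using sm unfolding smoothness_criterion_def by auto
  obtain u :: "'k \<Rightarrow> int^'k" where zb: "zbasis u"
    and edges: "\<And>j. (slice m v \<inter> {p0 + t *\<^sub>R rv (u j) | t. 0 \<le> t}) edge_of slice m v"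
    using dz p0 unfolding delzant_def by blast
  define I0 where "I0 = {i. i < m \<and> p0 \<in> slice_facet m v i}"
  have p0P: "p0 \<in> slice m v" using p0 by (simp add: extreme_point_of_def)
  define x0 :: "real^('k option)" where "x0 = emb p0"
  have x0nz: "x0 \<noteq> 0" unfolding x0_def by (metis emb_None zero_index zero_neq_one)
  define R where "R = conic hull (emb ` {p0})"
  have Rface: "R face_of pcone m v"
    unfolding R_def by (rule cone_face[OF pos]) (simp add: face_of_singleton p0)
  have x0R: "x0 \<in> R" unfolding R_def x0_def by (rule hull_inc) simp
  have Rspan: "span R = span {x0}"
    unfolding span_eq
  proof
    show "R \<subseteq> span {x0}"
      unfolding R_def x0_def
      by (clarsimp simp: conic_hull_explicit) (rule span_mul, rule span_base, simp)
    show "{x0} \<subseteq> span R" using x0R by (auto intro: span_base)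
  qed
  have "independent {x0}" using x0nz by (intro independent_insertI) (auto simp: independent_empty)
  then have "aff_dim R = 1" using aff_dim_span[OF _ Rspan] by (simp add: R_def)
  then have RI: "card {i. i < m \<and> R \<subseteq> cone_facet m v i} = CARD('k)"
    using good_cone_card[OF gc _ _ Rface, of "CARD('k)"] card2 by (simp add: card_opt)
  have "{i. i < m \<and> R \<subseteq> cone_facet m v i} = I0"
  proof -
    have "R \<subseteq> cone_facet m v i \<longleftrightarrow> x0 \<in> cone_facet m v i" for i
      using x0R unfolding R_def x0_def by (auto simp: conic_hull_explicit cone_facet_scale)
    then show ?thesis unfolding I0_def x0_def by (auto simp: emb_cone_facet)
  qed
  then have cardI0: "card I0 = CARD('k)" using RI by simp
  have finI0: "finite I0" unfolding I0_def by simp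
  have col: "CARD('k) \<le> card {i\<in>I0. idot (vtil (v i)) (u j) = 0} + 1" for j
  proof -
    define E where "E = slice m v \<inter> {p0 + t *\<^sub>R rv (u j) | t. 0 \<le> t}"
    have Eedge: "E edge_of slice m v" using edges E_def by simp
    then have Eface: "E face_of slice m v" and Ead: "aff_dim E = 1" by (auto simp: edge_of_def)
    have p0E: "p0 \<in> E" unfolding E_def using p0P by (auto intro!: exI[of _ 0])
    obtain p1 where p1E: "p1 \<in> E" and p10: "p1 \<noteq> p0"
    proof (rule ccontr)
      assume "\<not> thesis"
      then have "E = {p0}" using p0E that by blast
      then show False using Ead by simp
    qed
    obtain t1 where t1: "p1 = p0 + t1 *\<^sub>R rv (u j)" using p1E E_def by blast
    have t1nz: "t1 \<noteq> 0" using t1 p10 by auto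
    define K where "K = conic hull (emb ` E)"
    have Kface: "K face_of pcone m v" unfolding K_def by (rule cone_face[OF pos Eface])
    define x1 where "x1 = emb p1"
    have x01: "x0 \<noteq> x1" using p10 unfolding x0_def x1_def by (metis prj_emb)
    have Kspan: "span K = span {x0, x1}"
      unfolding span_eq
    proof
      show "K \<subseteq> span {x0, x1}"
      proof
        fix y assume "y \<in> K"
        then obtain c q where y: "y = c *\<^sub>R emb q" "q \<in> E" by (auto simp: K_def conic_hull_explicit)
        then obtain t where q: "q = p0 + t *\<^sub>R rv (u j)" using E_def by blast
        have "q = (1 - t / t1) *\<^sub>R p0 + (t / t1) *\<^sub>R p1"
          using t1nz by (simp add: t1 q algebra_simps)
        then have "emb q = (1 - t / t1) *\<^sub>R x0 + (t / t1) *\<^sub>R x1"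
          using emb_comb[of "1 - t/t1" "t/t1" p0 p1] by (simp add: x0_def x1_def)
        moreover have "(1 - t / t1) *\<^sub>R x0 + (t / t1) *\<^sub>R x1 \<in> span {x0, x1}"
          by (intro span_add span_mul) (simp_all add: span_base)
        ultimately show "y \<in> span {x0, x1}" unfolding y by (simp add: span_mul)
      qed
      have "x0 \<in> K" "x1 \<in> K" using p0E p1E unfolding K_def x0_def x1_def
        by (auto intro: hull_inc)
      then show "{x0, x1} \<subseteq> span K" by (auto intro: span_base)
    qed
    have "independent {x0, x1}"
    proof (intro independent_insertI)
      show "x0 \<notin> span {x1}"
      proof
        assume "x0 \<in> span {x1}"
        then obtain k where "x0 = k *\<^sub>R x1" by (auto simp: span_singleton)
        moreover then have "x0 $ None = (k *\<^sub>R x1) $ None" by simp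
        then have "k = 1" by (simp add: x0_def x1_def)
        ultimately show False using x01 by simp
      qed
      show "x1 \<notin> span {}" using x1_def by (simp add: span_empty) (metis emb_None zero_index zero_neq_one)
    qed (simp add: independent_empty)
    then have "aff_dim K = 2" using aff_dim_span[OF _ Kspan] x01 p0E by (auto simp: K_def)
    then have KI: "card {i. i < m \<and> K \<subseteq> cone_facet m v i} = CARD('k) - 1"
      using good_cone_card[OF gc _ _ Kface, of "CARD('k) - 1"] card2 by (simp add: card_opt)
    have "{i. i < m \<and> K \<subseteq> cone_facet m v i} \<subseteq> {i\<in>I0. idot (vtil (v i)) (u j) = 0}"
    proof safe
      fix i assume i: "i < m" "K \<subseteq> cone_facet m v i"
      have "x0 \<in> K" "x1 \<in> K" using p0E p1E unfolding K_def x0_def x1_def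
        by (auto intro: hull_inc)
      then have f0: "p0 \<in> slice_facet m v i" and f1: "p1 \<in> slice_facet m v i"
        using i emb_cone_facet unfolding x0_def x1_def by blast+
      then show "i \<in> I0" using i unfolding I0_def by simp
      have "p1 \<bullet> rv (vtil (v i)) = p0 \<bullet> rv (vtil (v i))" using f0 f1 by (simp add: slice_facet_def)
      then have "t1 * (rv (u j) \<bullet> rv (vtil (v i))) = 0" by (simp add: t1 inner_add_left)
      then show "idot (vtil (v i)) (u j) = 0" using t1nz by (simp add: rv_inner idot_comm)
    qed
    then have "card {i. i < m \<and> K \<subseteq> cone_facet m v i} \<le> card {i\<in>I0. idot (vtil (v i)) (u j) = 0}"
      using finI0 by (intro card_mono) auto
    then show ?thesis using KI by linarith
  qed
  have primI0: "\<forall>i\<in>I0. primitive (vtil (v i))" using prim I0_def by simp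
  obtain b where "\<forall>i\<in>I0. idot b (vtil (v i)) = - v i $ None"
    using lattice_solve[OF finI0 cardI0 zb primI0 allI[OF col], of "\<lambda>i. - v i $ None"] by blast
  then show ?thesis unfolding I0_def by blast
qed

lemma torus_closed: "closed (torus :: (complex^'a::finite) set)"
proof -
  have eq: "torus = (\<Inter>j. {t::complex^'a. norm (t $ j) = 1})" by (auto simp: torus_def)
  have c: "closed {t::complex^'a. norm (t $ j) = 1}" for j
    by (intro closed_Collect_eq continuous_intros)
  show ?thesis unfolding eq by (rule closed_INT) (use c in auto)
qed

lemma torus_nz: "t \<in> torus \<Longrightarrow> t $ j \<noteq> 0"
  by (auto simp: torus_def dest: spec[of _ j])

lemma torus_norm: "t \<in> torus \<Longrightarrow> norm (t $ j) = 1" by (simp add: torus_def)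

lemma tmul_torus: "s \<in> torus \<Longrightarrow> t \<in> torus \<Longrightarrow> tmul s t \<in> torus"
  by (simp add: torus_def tmul_def norm_mult)

lemma tinv_torus: "t \<in> torus \<Longrightarrow> tinv t \<in> torus"
  by (simp add: torus_def tinv_def norm_inverse)

lemma tone_torus: "tone \<in> torus" by (simp add: torus_def tone_def)

lemma tline_torus: "tline w \<subseteq> torus" by (auto simp: tline_def torus_def)

lemma tmul_tinv_self: "t \<in> torus \<Longrightarrow> tmul (tinv t) t = tone"
  by (simp add: tmul_def tinv_def tone_def vec_eq_iff torus_nz)

definition csg_family :: "(complex^'a) set \<Rightarrow> (complex^'a) set set" where
  "csg_family S = {H. H \<subseteq> torus \<and> closed H \<and> tone \<in> H \<and>
      (\<forall>a\<in>H. \<forall>b\<in>H. tmul a b \<in> H \<and> tinv a \<in> H) \<and> S \<subseteq> H}"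

lemma csg_eq: "closed_subgroup_gen S = \<Inter>(csg_family S)"
  by (simp add: closed_subgroup_gen_def csg_family_def)

lemma torus_in_family: "S \<subseteq> torus \<Longrightarrow> (torus :: (complex^'a::finite) set) \<in> csg_family S"
  by (simp add: csg_family_def torus_closed tone_torus tmul_torus tinv_torus)

lemma csg_least: "H \<subseteq> torus \<Longrightarrow> closed H \<Longrightarrow> tone \<in> H \<Longrightarrow> (\<forall>a\<in>H. \<forall>b\<in>H. tmul a b \<in> H \<and> tinv a \<in> H)
   \<Longrightarrow> S \<subseteq> H \<Longrightarrow> closed_subgroup_gen S \<subseteq> H"
  unfolding csg_eq csg_family_def by blast

lemma csg_torus: "S \<subseteq> torus \<Longrightarrow> closed_subgroup_gen S \<subseteq> (torus :: (complex^'a::finite) set)"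
  unfolding csg_eq using torus_in_family by blast

lemma csg_one: "tone \<in> closed_subgroup_gen S"
  unfolding csg_eq csg_family_def by blast

lemma csg_mul: "a \<in> closed_subgroup_gen S \<Longrightarrow> b \<in> closed_subgroup_gen S \<Longrightarrow> tmul a b \<in> closed_subgroup_gen S"
  unfolding csg_eq csg_family_def by blast

lemma csg_inv: "a \<in> closed_subgroup_gen S \<Longrightarrow> tinv a \<in> closed_subgroup_gen S"
  unfolding csg_eq csg_family_def by blast

lemma csg_closed: "closed (closed_subgroup_gen S)"
  unfolding csg_eq csg_family_def by (intro closed_Inter) blast

lemma csg_sub: "S \<subseteq> closed_subgroup_gen S"
  unfolding csg_eq csg_family_def by blast

lemma tinv_tmul: "s \<in> torus \<Longrightarrow> t \<in> torus \<Longrightarrow> tinv (tmul s t) = tmul (tinv s) (tinv t)"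
  by (simp add: tmul_def tinv_def vec_eq_iff)

lemma tinv_tinv: "tinv (tinv t) = t" by (simp add: tinv_def vec_eq_iff)

lemma tmul_assoc: "tmul (tmul a b) c = tmul a (tmul b c)" by (simp add: tmul_def vec_eq_iff mult.assoc)
lemma tmul_comm: "tmul a b = tmul b a" by (simp add: tmul_def vec_eq_iff mult.commute)

lemma tor_rel_equiv:
  fixes w :: "nat \<Rightarrow> int^'a::finite"
  shows "equiv (torus \<times> P) (tor_rel m w P Fac)"
proof (rule equivI)
  show "tor_rel m w P Fac \<subseteq> (torus \<times> P) \<times> (torus \<times> P)" by (auto simp: tor_rel_def)
  let ?G = "\<lambda>p. closed_subgroup_gen (\<Union>i\<in>{i. i < m \<and> p \<in> Fac i}. tline (w i))"
  have St: "(\<Union>i\<in>{i. i < m \<and> p \<in> Fac i}. tline (w i)) \<subseteq> torus" for p using tline_torus by blast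
  show "refl_on (torus \<times> P) (tor_rel m w P Fac)"
    by (auto simp: refl_on_def tor_rel_def tmul_tinv_self csg_one)
  show "sym (tor_rel m w P Fac)"
  proof (rule symI)
    fix x y assume "(x, y) \<in> tor_rel m w P Fac"
    then obtain g p h where xy: "x = (g, p)" "y = (h, p)" "g \<in> torus" "h \<in> torus" "p \<in> P"
      "tmul (tinv g) h \<in> ?G p" by (auto simp: tor_rel_def)
    have "tmul (tinv h) g = tinv (tmul (tinv g) h)"
      using xy by (simp add: tinv_tmul tinv_torus tinv_tinv tmul_comm)
    then show "(y, x) \<in> tor_rel m w P Fac" using xy csg_inv by (auto simp: tor_rel_def)
  qed
  show "trans (tor_rel m w P Fac)"
  proof (rule transI)
    fix x y z assume "(x, y) \<in> tor_rel m w P Fac" "(y, z) \<in> tor_rel m w P Fac"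
    then obtain g p h k where xy: "x = (g, p)" "y = (h, p)" "z = (k, p)" "g \<in> torus" "h \<in> torus" "k \<in> torus" "p \<in> P"
      "tmul (tinv g) h \<in> ?G p" "tmul (tinv h) k \<in> ?G p" by (auto simp: tor_rel_def)
    have "tmul (tinv g) k = tmul (tmul (tinv g) h) (tmul (tinv h) k)"
      using xy(5) by (simp add: tmul_def tinv_def vec_eq_iff torus_nz)
    then show "(x, z) \<in> tor_rel m w P Fac" using xy csg_mul by (auto simp: tor_rel_def)
  qed
qed

definition chi :: "int^'a \<Rightarrow> complex^'a \<Rightarrow> complex" where
  "chi a t = (\<Prod>j\<in>UNIV. power_int (t $ j) (a $ j))"

lemma chi_mul: "chi a (tmul s t) = chi a s * chi a t"
  by (simp add: chi_def tmul_def power_int_mult_distrib prod.distrib)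

lemma chi_inv: "chi a (tinv t) = inverse (chi a t)"
  using prod_inversef[of "\<lambda>j. power_int (t $ j) (a $ j)" UNIV]
  by (simp add: chi_def tinv_def power_int_inverse o_def)

lemma chi_one: "chi a tone = 1" by (simp add: chi_def tone_def)

lemma cis_sum: "cis (sum f A) = (\<Prod>x\<in>A. cis (f x))"
  by (induction A rule: infinite_finite_induct) (auto simp: cis_mult[symmetric])

lemma chi_tline_elem:
  "chi a (\<chi> j. cis (2 * pi * s * real_of_int (w $ j))) = cis (2 * pi * s * real_of_int (idot a w))"
proof -
  have "chi a (\<chi> j. cis (2 * pi * s * real_of_int (w $ j))) = (\<Prod>j\<in>UNIV. cis (real_of_int (a $ j) * (2 * pi * s * real_of_int (w $ j))))"
    by (simp add: chi_def cis_power_int)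
  also have "\<dots> = cis (2 * pi * s * real_of_int (idot a w))"
    by (simp add: cis_sum[symmetric] idot_def sum_distrib_left mult_ac)
  finally show ?thesis .
qed

lemma chi_norm: "t \<in> torus \<Longrightarrow> norm (chi a t) = 1"
  by (simp add: chi_def prod_norm[symmetric] norm_power_int torus_norm)

lemma chi_cont: "continuous_on torus (chi a)"
  unfolding chi_def by (intro continuous_intros) (auto simp: torus_nz)

lemma tmul_cont: "continuous_on S f \<Longrightarrow> continuous_on S g \<Longrightarrow> continuous_on S (\<lambda>x. tmul (f x) (g x))"
  unfolding tmul_def by (intro continuous_intros)

lemma quot_istop:
  assumes eq: "equiv (topspace X) R"
  shows "istopology (\<lambda>U. U \<subseteq> topspace X // R \<and> openin X (\<Union>U))"
  unfolding istopology_def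
proof (rule conjI; intro allI impI)
  fix S T assume S: "S \<subseteq> topspace X // R \<and> openin X (\<Union>S)" and T: "T \<subseteq> topspace X // R \<and> openin X (\<Union>T)"
  have "\<Union>(S \<inter> T) = \<Union>S \<inter> \<Union>T"
  proof
    show "\<Union>S \<inter> \<Union>T \<subseteq> \<Union>(S \<inter> T)"
    proof
      fix x assume "x \<in> \<Union>S \<inter> \<Union>T"
      then obtain A B where AB: "A \<in> S" "B \<in> T" "x \<in> A" "x \<in> B" by auto
      then have "A = B" using quotient_disj[OF eq, of A B] S T by auto
      then show "x \<in> \<Union>(S \<inter> T)" using AB by auto
    qed
  qed auto
  then show "S \<inter> T \<subseteq> topspace X // R \<and> openin X (\<Union>(S \<inter> T))" using S T by auto
next
  fix K assume K: "\<forall>U\<in>K. U \<subseteq> topspace X // R \<and> openin X (\<Union>U)"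
  have "\<Union>(\<Union>K) = (\<Union>U\<in>K. \<Union>U)" by auto
  then show "\<Union>K \<subseteq> topspace X // R \<and> openin X (\<Union>(\<Union>K))" using K by auto
qed

lemma quot_openin:
  assumes eq: "equiv (topspace X) R"
  shows "openin (quotient_topology X R) U \<longleftrightarrow> U \<subseteq> topspace X // R \<and> openin X (\<Union>U)"
  unfolding quotient_topology_def using topology_inverse'[OF quot_istop[OF eq]] by simp

lemma quot_topspace:
  assumes eq: "equiv (topspace X) R"
  shows "topspace (quotient_topology X R) = topspace X // R"
proof -
  have "openin (quotient_topology X R) (topspace X // R)"
    using quot_openin[OF eq] Union_quotient[OF eq] by simp
  then have "topspace X // R \<subseteq> topspace (quotient_topology X R)" by (rule openin_subset)
  moreover have "topspace (quotient_topology X R) \<subseteq> topspace X // R"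
    using quot_openin[OF eq, of "topspace (quotient_topology X R)"] by simp
  ultimately show ?thesis by blast
qed

lemma quot_preimage:
  assumes eq: "equiv (topspace X) R" and U: "U \<subseteq> topspace X // R"
  shows "{x \<in> topspace X. R `` {x} \<in> U} = \<Union>U"
proof
  show "{x \<in> topspace X. R `` {x} \<in> U} \<subseteq> \<Union>U"
    using eq by (auto simp: equiv_def refl_on_def)
  show "\<Union>U \<subseteq> {x \<in> topspace X. R `` {x} \<in> U}"
  proof
    fix x assume "x \<in> \<Union>U"
    then obtain C where C: "C \<in> U" "x \<in> C" by auto
    then obtain y where y: "y \<in> topspace X" "C = R `` {y}" using U by (auto elim: quotientE)
    then have xy: "(y, x) \<in> R" using C by auto
    then have "R `` {x} = R `` {y}" using eq by (metis equiv_class_eq equiv_def symD)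
    moreover have "x \<in> topspace X" using xy eq by (auto simp: equiv_def refl_on_def)
    ultimately show "x \<in> {x \<in> topspace X. R `` {x} \<in> U}" using C y by auto
  qed
qed

lemma quot_map:
  assumes eq: "equiv (topspace X) R"
  shows "quotient_map X (quotient_topology X R) (\<lambda>x. R `` {x})"
  unfolding quotient_map_def
proof (intro conjI allI impI)
  show "(\<lambda>x. R `` {x}) ` topspace X = topspace (quotient_topology X R)"
    by (auto simp: quot_topspace[OF eq] quotient_def)
  fix U assume "U \<subseteq> topspace (quotient_topology X R)"
  then have U: "U \<subseteq> topspace X // R" by (simp add: quot_topspace[OF eq])
  show "openin X {x \<in> topspace X. R `` {x} \<in> U} = openin (quotient_topology X R) U"
    using quot_preimage[OF eq U] quot_openin[OF eq] U by simp
qed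

definition GM :: "nat \<Rightarrow> (nat \<Rightarrow> int^('k::finite option)) \<Rightarrow> real^'k \<Rightarrow> (complex^('k option)) set" where
  "GM m v p = closed_subgroup_gen (\<Union>i\<in>{i. i < m \<and> p \<in> slice_facet m v i}. tline (v i))"

definition GN :: "nat \<Rightarrow> (nat \<Rightarrow> int^('k::finite option)) \<Rightarrow> real^'k \<Rightarrow> (complex^'k) set" where
  "GN m v p = closed_subgroup_gen (\<Union>i\<in>{i. i < m \<and> p \<in> slice_facet m v i}. tline (vtil (v i)))"

lemma relM_iff: "((t, p), (t', p')) \<in> rel_M m v \<longleftrightarrow>
   t \<in> torus \<and> t' \<in> torus \<and> p \<in> slice m v \<and> p' = p \<and> tmul (tinv t) t' \<in> GM m v p"
  by (auto simp: rel_M_def tor_rel_def GM_def)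

lemma relN_iff: "((t, p), (t', p')) \<in> rel_N m v \<longleftrightarrow>
   t \<in> torus \<and> t' \<in> torus \<and> p \<in> slice m v \<and> p' = p \<and> tmul (tinv t) t' \<in> GN m v p"
  by (auto simp: rel_N_def tor_rel_def GN_def)

lemma equivM: "equiv (torus \<times> slice m v) (rel_M m v)"
  unfolding rel_M_def by (rule tor_rel_equiv)

lemma equivN: "equiv (torus \<times> slice m v) (rel_N m v)"
  unfolding rel_N_def by (rule tor_rel_equiv)

lemma GM_torus: "GM m v p \<subseteq> torus"
  unfolding GM_def by (rule csg_torus) (use tline_torus in blast)

lemma GN_torus: "GN m v p \<subseteq> torus"
  unfolding GN_def by (rule csg_torus) (use tline_torus in blast)

lemma ttil_tmul: "ttil (tmul a b) = tmul (ttil a) (ttil b)" by (simp add: ttil_def tmul_def vec_eq_iff)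
lemma ttil_tinv: "ttil (tinv a) = tinv (ttil a)" by (simp add: ttil_def tinv_def vec_eq_iff)
lemma ttil_tone: "ttil tone = tone" by (simp add: ttil_def tone_def vec_eq_iff)
lemma ttil_torus: "t \<in> torus \<Longrightarrow> ttil t \<in> torus" by (simp add: ttil_def torus_def)
lemma ttil_cont: "continuous_on S f \<Longrightarrow> continuous_on S (\<lambda>x. ttil (f x))"
  unfolding ttil_def by (intro continuous_intros)

lemma ttil_tline: "g \<in> tline w \<Longrightarrow> ttil g \<in> tline (vtil w)"
  by (auto simp: tline_def ttil_def vtil_def)

lemma proj_G: "g \<in> GM m v p \<Longrightarrow> ttil g \<in> GN m v p"
proof -
  assume g: "g \<in> GM m v p"
  let ?H = "torus \<inter> ttil -` GN m v p"
  have "GM m v p \<subseteq> ?H" unfolding GM_def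
  proof (rule csg_least)
    show "?H \<subseteq> torus" by blast
    have "closed (GN m v p)" unfolding GN_def by (rule csg_closed)
    then show "closed ?H" using continuous_closed_preimage[OF ttil_cont[OF continuous_on_id] torus_closed, of "GN m v p"]
      by simp
    have "ttil tone \<in> GN m v p" unfolding ttil_tone GN_def by (rule csg_one)
    then show "tone \<in> ?H" using tone_torus by simp
    show "\<forall>a\<in>?H. \<forall>b\<in>?H. tmul a b \<in> ?H \<and> tinv a \<in> ?H"
    proof (intro ballI conjI)
      fix a b assume a: "a \<in> ?H" and b: "b \<in> ?H"
      have "ttil (tmul a b) \<in> GN m v p" unfolding ttil_tmul GN_def
        by (rule csg_mul) (use a b in \<open>simp_all add: GN_def\<close>)
      then show "tmul a b \<in> ?H" using a b tmul_torus by blast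
      have "ttil (tinv a) \<in> GN m v p" unfolding ttil_tinv GN_def
        by (rule csg_inv) (use a in \<open>simp_all add: GN_def\<close>)
      then show "tinv a \<in> ?H" using a tinv_torus by blast
    qed
    show "(\<Union>i\<in>{i. i < m \<and> p \<in> slice_facet m v i}. tline (v i)) \<subseteq> ?H"
    proof clarify
      fix i x assume "i < m" "p \<in> slice_facet m v i" "x \<in> tline (v i)"
      then have i: "i \<in> {i. i < m \<and> p \<in> slice_facet m v i}" "x \<in> tline (v i)" by auto
      have xt: "x \<in> torus" using i(2) tline_torus by blast
      have "ttil x \<in> tline (vtil (v i))" using i(2) by (rule ttil_tline)
      then have "ttil x \<in> (\<Union>i\<in>{i. i < m \<and> p \<in> slice_facet m v i}. tline (vtil (v i)))" using i(1) by blast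
      then have "ttil x \<in> GN m v p" unfolding GN_def by (rule subsetD[OF csg_sub])
      then show "x \<in> ?H" using xt by blast
    qed
  qed
  then show ?thesis using g by blast
qed

lemma UN_const_eq: "(\<And>x. x \<in> X \<Longrightarrow> g x = c) \<Longrightarrow> a \<in> X \<Longrightarrow> (\<Union>x\<in>X. g x) = c"
  by auto

lemma class_eqI: "equiv A R \<Longrightarrow> (x, y) \<in> R \<Longrightarrow> R `` {x} = R `` {y}"
  by (rule equiv_class_eq)

lemma d_q:
  assumes t: "t \<in> torus" and p: "p \<in> slice m v"
  shows "proj_d m v (rel_M m v `` {(t, p)}) = rel_N m v `` {(ttil t, p)}"
proof -
  have "rel_N m v `` {(ttil t', p')} = rel_N m v `` {(ttil t, p)}" if "(t', p') \<in> rel_M m v `` {(t, p)}" for t' p'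
  proof -
    have h: "t' \<in> torus" "p' = p" "tmul (tinv t) t' \<in> GM m v p" using that by (auto simp: relM_iff)
    have "((ttil t, p), (ttil t', p')) \<in> rel_N m v"
      using h t p proj_G[OF h(3)] by (simp add: relN_iff ttil_torus ttil_tmul ttil_tinv)
    then show ?thesis using class_eqI[OF equivN, symmetric] by blast
  qed
  moreover have "(t, p) \<in> rel_M m v `` {(t, p)}" using t p equivM by (auto simp: equiv_def refl_on_def)
  ultimately show ?thesis unfolding proj_d_def induced_map_def
  proof (intro UN_const_eq[where a="(t, p)"])
    fix x assume H: "\<And>t' p'. (t', p') \<in> rel_M m v `` {(t, p)} \<Longrightarrow>
      rel_N m v `` {(ttil t', p')} = rel_N m v `` {(ttil t, p)}"
      and x: "x \<in> rel_M m v `` {(t, p)}"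
    obtain t' p' where "x = (t', p')" by (cases x)
    then show "rel_N m v `` {(\<lambda>(t, p). (ttil t, p)) x} = rel_N m v `` {(ttil t, p)}"
      using H x by simp
  qed
qed

lemma lc_torus: "z \<in> circle \<Longrightarrow> last_circle z \<in> torus"
  by (simp add: last_circle_def torus_def circle_def)

lemma lc_one: "last_circle 1 = tone" by (simp add: last_circle_def tone_def vec_eq_iff)
lemma lc_mul: "last_circle (z * w) = tmul (last_circle z) (last_circle w)"
  by (simp add: last_circle_def tmul_def vec_eq_iff)
lemma tmul_tone: "tmul tone t = t" by (simp add: tmul_def tone_def vec_eq_iff)
lemma ttil_lc: "ttil (tmul (last_circle z) t) = ttil t" by (simp add: ttil_def tmul_def last_circle_def vec_eq_iff)

lemma lc_cont:
  assumes f: "continuous_on S f"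
  shows "continuous_on S (\<lambda>x. last_circle (f x))"
  unfolding last_circle_def
proof (intro continuous_on_vec_lambda)
  fix j
  from f show "continuous_on S (\<lambda>x. if j = None then f x else 1)" by (cases "j = None") auto
qed

lemma tinv_cancel:
  assumes a: "a \<in> torus"
  shows "tmul (tinv (tmul a t)) (tmul a t') = tmul (tinv t) t'"
proof -
  have nz: "a $ i \<noteq> 0" for i using torus_nz[OF a] .
  have "inverse (a $ i * t $ i) * (a $ i * t' $ i) = inverse (t $ i) * t' $ i" for i
    using nz[of i] by (simp add: inverse_mult_distrib)
  then show ?thesis by (simp add: tmul_def tinv_def vec_eq_iff)
qed

lemma act_q:
  assumes z: "z \<in> circle" and t: "t \<in> torus" and p: "p \<in> slice m v"
  shows "act_M m v z (rel_M m v `` {(t, p)}) = rel_M m v `` {(tmul (last_circle z) t, p)}"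
proof -
  have "rel_M m v `` {(tmul (last_circle z) t', p')} = rel_M m v `` {(tmul (last_circle z) t, p)}"
    if "(t', p') \<in> rel_M m v `` {(t, p)}" for t' p'
  proof -
    have h: "t' \<in> torus" "p' = p" "tmul (tinv t) t' \<in> GM m v p" using that by (auto simp: relM_iff)
    have e: "tmul (tinv (tmul (last_circle z) t)) (tmul (last_circle z) t') = tmul (tinv t) t'"
      using lc_torus[OF z] by (rule tinv_cancel)
    have "((tmul (last_circle z) t, p), (tmul (last_circle z) t', p')) \<in> rel_M m v"
      using h t p e tmul_torus[OF lc_torus[OF z] t] tmul_torus[OF lc_torus[OF z] h(1)] by (simp add: relM_iff)
    then show ?thesis using class_eqI[OF equivM, symmetric] by blast
  qed
  moreover have "(t, p) \<in> rel_M m v `` {(t, p)}" using t p equivM by (auto simp: equiv_def refl_on_def)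
  ultimately show ?thesis unfolding act_M_def induced_map_def
  proof (intro UN_const_eq[where a="(t, p)"])
    fix x assume H: "\<And>t' p'. (t', p') \<in> rel_M m v `` {(t, p)} \<Longrightarrow>
      rel_M m v `` {(tmul (last_circle z) t', p')} = rel_M m v `` {(tmul (last_circle z) t, p)}"
      and x: "x \<in> rel_M m v `` {(t, p)}"
    obtain t' p' where "x = (t', p')" by (cases x)
    then show "rel_M m v `` {(\<lambda>(t, p). (tmul (last_circle z) t, p)) x} = rel_M m v `` {(tmul (last_circle z) t, p)}"
      using H x by simp
  qed
qed

definition aext :: "int^'k \<Rightarrow> int^('k::finite option)" where
  "aext b = (\<chi> j. case j of None \<Rightarrow> 1 | Some l \<Rightarrow> b $ l)"

definition extv :: "complex^'k \<Rightarrow> complex \<Rightarrow> complex^('k::finite option)" where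
  "extv s z = (\<chi> j. case j of None \<Rightarrow> z | Some l \<Rightarrow> s $ l)"

definition lift :: "int^'k \<Rightarrow> complex^'k \<Rightarrow> complex^('k::finite option)" where
  "lift b g = extv g (inverse (chi b g))"

lemma chi_aext: "chi (aext b) t = chi b (ttil t) * t $ None"
  by (simp add: chi_def prod_option aext_def ttil_def mult.commute)

lemma idot_aext: "idot (aext b) w = idot b (vtil w) + w $ None"
  by (simp add: idot_def sum_option aext_def vtil_def)

lemma ttil_extv[simp]: "ttil (extv s z) = s" by (simp add: ttil_def extv_def vec_eq_iff)
lemma extv_None[simp]: "extv s z $ None = z" by (simp add: extv_def)
lemma extv_ttil: "extv (ttil t) (t $ None) = t"
  by (auto simp: extv_def ttil_def vec_eq_iff split: option.splits)

lemma extv_torus: "s \<in> torus \<Longrightarrow> norm z = 1 \<Longrightarrow> extv s z \<in> torus"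
  by (auto simp: torus_def extv_def split: option.splits)

lemma chi_extv: "chi (aext b) (extv s z) = chi b s * z" by (simp add: chi_aext)

lemma chi_lc: "chi (aext b) (last_circle z) = z"
  by (simp add: chi_def prod_option aext_def last_circle_def)

lemma chi_nz: "t \<in> torus \<Longrightarrow> chi a t \<noteq> 0"
proof -
  assume "t \<in> torus"
  then have "norm (chi a t) = 1" by (rule chi_norm)
  then show ?thesis by auto
qed

lemma extv_cont: "continuous_on S f \<Longrightarrow> continuous_on S g \<Longrightarrow> continuous_on S (\<lambda>x. extv (f x) (g x))"
  unfolding extv_def
proof (intro continuous_on_vec_lambda)
  fix j assume "continuous_on S f" "continuous_on S g"
  then show "continuous_on S (\<lambda>x. case j of None \<Rightarrow> g x | Some l \<Rightarrow> f x $ l)"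
    by (cases j) (auto intro: continuous_intros)
qed

lemma chi_cont_comp: "continuous_on S f \<Longrightarrow> f ` S \<subseteq> torus \<Longrightarrow> continuous_on S (\<lambda>x. chi a (f x))"
  using continuous_on_compose2[OF chi_cont] by blast

lemma lift_tmul: "s \<in> torus \<Longrightarrow> s' \<in> torus \<Longrightarrow> norm z = 1 \<Longrightarrow>
  tmul (tinv (extv s (z * inverse (chi b s)))) (extv s' (z * inverse (chi b s'))) = lift b (tmul (tinv s) s')"
proof -
  assume s: "s \<in> torus" and s': "s' \<in> torus" and z: "norm z = 1"
  have c: "chi b s \<noteq> 0" "chi b s' \<noteq> 0" using chi_nz[OF s] chi_nz[OF s'] by auto
  have z0: "z \<noteq> 0" using z by auto
  have "inverse (z * inverse (chi b s)) * (z * inverse (chi b s')) = inverse (chi b (tmul (tinv s) s'))"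
    using c z0 by (simp add: chi_mul chi_inv field_simps)
  then show ?thesis
    by (auto simp: lift_def extv_def tmul_def tinv_def vec_eq_iff split: option.splits)
qed

lemma chi_tline: "g \<in> tline w \<Longrightarrow> chi a g = cis (2 * pi * s * real_of_int (idot a w)) \<or> (\<exists>s. chi a g = cis (2 * pi * s * real_of_int (idot a w)))"
  by (auto simp: tline_def chi_tline_elem)

lemma ker_G:
  assumes hb: "\<forall>i<m. q \<in> slice_facet m v i \<longrightarrow> idot b (vtil (v i)) = - v i $ None"
    and g: "g \<in> GM m v q"
  shows "chi (aext b) g = 1"
proof -
  let ?H = "torus \<inter> chi (aext b) -` {1}"
  have "GM m v q \<subseteq> ?H" unfolding GM_def
  proof (rule csg_least)
    show "?H \<subseteq> torus" by blast
    show "closed ?H" using continuous_closed_preimage[OF chi_cont torus_closed, of "{1}"] by simp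
    show "tone \<in> ?H" by (simp add: tone_torus chi_one)
    show "\<forall>a\<in>?H. \<forall>b\<in>?H. tmul a b \<in> ?H \<and> tinv a \<in> ?H"
      by (auto simp: tmul_torus tinv_torus chi_mul chi_inv)
    show "(\<Union>i\<in>{i. i < m \<and> q \<in> slice_facet m v i}. tline (v i)) \<subseteq> ?H"
    proof clarify
      fix i x assume i: "i < m" "q \<in> slice_facet m v i" and x: "x \<in> tline (v i)"
      have "idot (aext b) (v i) = 0" using hb i by (simp add: idot_aext)
      moreover obtain s where "x = (\<chi> j. cis (2 * pi * s * real_of_int (v i $ j)))" using x by (auto simp: tline_def)
      ultimately have "chi (aext b) x = 1" by (simp add: chi_tline_elem)
      then show "x \<in> ?H" using x tline_torus by blast
    qed
  qed
  then show ?thesis using g by blast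
qed

lemma lift_G:
  assumes hb: "\<forall>i<m. q \<in> slice_facet m v i \<longrightarrow> idot b (vtil (v i)) = - v i $ None"
    and g: "g \<in> GN m v q"
  shows "lift b g \<in> GM m v q"
proof -
  let ?H = "torus \<inter> lift b -` GM m v q"
  have nz: "chi b t \<noteq> 0" if "t \<in> torus" for t using chi_nz[OF that] .
  have lcont: "continuous_on torus (lift b)"
    unfolding lift_def
    by (intro extv_cont continuous_on_id continuous_intros chi_cont_comp) (auto simp: nz)
  have ltor: "lift b t \<in> torus" if "t \<in> torus" for t
    unfolding lift_def using that by (intro extv_torus) (auto simp: chi_norm norm_inverse)
  have "GN m v q \<subseteq> ?H" unfolding GN_def
  proof (rule csg_least)
    show "?H \<subseteq> torus" by blast
    have "closed (GM m v q)" unfolding GM_def by (rule csg_closed)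
    then show "closed ?H" using continuous_closed_preimage[OF lcont torus_closed, of "GM m v q"] by simp
    have "lift b tone = tone" unfolding lift_def chi_one by (simp add: extv_def tone_def vec_eq_iff split: option.splits)
    moreover have "tone \<in> GM m v q" unfolding GM_def by (rule csg_one)
    ultimately show "tone \<in> ?H" by (simp add: tone_torus)
    show "\<forall>a\<in>?H. \<forall>c\<in>?H. tmul a c \<in> ?H \<and> tinv a \<in> ?H"
    proof (intro ballI conjI)
      fix a c assume a: "a \<in> ?H" and c: "c \<in> ?H"
      have "lift b (tmul a c) = tmul (lift b a) (lift b c)"
        unfolding lift_def chi_mul by (simp add: extv_def tmul_def vec_eq_iff split: option.splits)
      moreover have "tmul (lift b a) (lift b c) \<in> GM m v q" unfolding GM_def
        by (rule csg_mul) (use a c in \<open>simp_all add: GM_def\<close>)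
      ultimately show "tmul a c \<in> ?H" using a c tmul_torus by auto
      have "lift b (tinv a) = tinv (lift b a)"
        unfolding lift_def chi_inv by (simp add: extv_def tinv_def vec_eq_iff split: option.splits)
      moreover have "tinv (lift b a) \<in> GM m v q" unfolding GM_def
        by (rule csg_inv) (use a in \<open>simp_all add: GM_def\<close>)
      ultimately show "tinv a \<in> ?H" using a tinv_torus by auto
    qed
    show "(\<Union>i\<in>{i. i < m \<and> q \<in> slice_facet m v i}. tline (vtil (v i))) \<subseteq> ?H"
    proof clarify
      fix i x assume i: "i < m" "q \<in> slice_facet m v i" and x: "x \<in> tline (vtil (v i))"
      obtain s where xs: "x = (\<chi> j. cis (2 * pi * s * real_of_int (vtil (v i) $ j)))" using x by (auto simp: tline_def)
      have "chi b x = cis (2 * pi * s * real_of_int (- v i $ None))"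
        using hb i by (simp add: xs chi_tline_elem)
      then have "lift b x = (\<chi> j. cis (2 * pi * s * real_of_int (v i $ j)))"
        by (auto simp: lift_def extv_def xs vec_eq_iff vtil_def split: option.splits)
      then have "lift b x \<in> tline (v i)" by (auto simp: tline_def)
      then have "lift b x \<in> GM m v q" unfolding GM_def using i by (intro subsetD[OF csg_sub]) blast
      then show "x \<in> ?H" using x tline_torus by blast
    qed
  qed
  then show ?thesis using g by blast
qed

lemma facet_face: "convex (slice m v) \<Longrightarrow> i < m \<Longrightarrow> slice_facet m v i face_of slice m v"
proof -
  assume cv: "convex (slice m v)" and im: "i < m"
  have "slice_facet m v i = slice m v \<inter> {y. rv (vtil (v i)) \<bullet> y = - real_of_int (v i $ None)}"
    by (auto simp: slice_facet_def inner_commute)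
  moreover have "(slice m v \<inter> {y. rv (vtil (v i)) \<bullet> y = - real_of_int (v i $ None)}) face_of slice m v"
    by (rule face_of_Int_supporting_hyperplane_ge[OF cv]) (use im in \<open>auto simp: slice_def inner_commute\<close>)
  ultimately show ?thesis by simp
qed

lemma facet_closed: "closed (slice m v) \<Longrightarrow> closed (slice_facet m v i)"
proof -
  assume c: "closed (slice m v)"
  have "slice_facet m v i = slice m v \<inter> {y. rv (vtil (v i)) \<bullet> y = - real_of_int (v i $ None)}"
    by (auto simp: slice_facet_def inner_commute)
  then show ?thesis using c closed_hyperplane by (metis closed_Int)
qed

lemma local_b:
  fixes m :: nat and v :: "nat \<Rightarrow> int^('k::finite option)"
  assumes card2: "CARD('k) \<ge> 2"
    and gc: "good_cone m v"
    and pos: "\<forall>x\<in>pcone m v. x \<noteq> 0 \<longrightarrow> x $ None > 0"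
    and sm: "smoothness_criterion m v"
    and p: "p \<in> slice m v"
  shows "\<exists>b Ob. p \<in> Ob \<and> openin (top_of_set (slice m v)) Ob \<and> Ob \<subseteq> slice m v \<and>
     (\<forall>q\<in>Ob. \<forall>i<m. q \<in> slice_facet m v i \<longrightarrow> idot b (vtil (v i)) = - v i $ None)"
proof -
  have poly: "polytope (slice m v)" using sm unfolding smoothness_criterion_def delzant_def by blast
  have cv: "convex (slice m v)" and cp: "compact (slice m v)"
    using poly by (auto simp: polytope_imp_convex polytope_imp_compact)
  have cl: "closed (slice m v)" using cp compact_imp_closed by blast
  define F where "F = \<Inter>(insert (slice m v) {slice_facet m v i | i. i < m \<and> p \<in> slice_facet m v i})"
  have Fface: "F face_of slice m v" unfolding F_def
    by (rule face_of_Inter) (auto intro: face_of_refl[OF cv] facet_face[OF cv])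
  have pF: "p \<in> F" using p unfolding F_def by auto
  have "compact F" by (rule face_of_imp_compact[OF cv cp Fface])
  moreover have "convex F" using Fface by (rule face_of_imp_convex)
  ultimately obtain p0 where p0F: "p0 extreme_point_of F"
    using extreme_point_exists_convex pF by blast
  then have "{p0} face_of F" by (simp add: face_of_singleton)
  then have "{p0} face_of slice m v" using Fface by (rule face_of_trans)
  then have p0: "p0 extreme_point_of slice m v" by (simp add: face_of_singleton)
  have p0F': "p0 \<in> F" using p0F by (simp add: extreme_point_of_def)
  have sub: "\<forall>i<m. p \<in> slice_facet m v i \<longrightarrow> p0 \<in> slice_facet m v i"
    using p0F' unfolding F_def by blast
  obtain b where b: "\<forall>i<m. p0 \<in> slice_facet m v i \<longrightarrow> idot b (vtil (v i)) = - v i $ None"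
    using vertex_solve[OF card2 gc pos sm p0] by blast
  define C where "C = \<Union>{slice_facet m v i | i. i < m \<and> p0 \<notin> slice_facet m v i}"
  have "closed C" unfolding C_def by (rule closed_Union) (auto intro: facet_closed[OF cl])
  define Ob where "Ob = slice m v \<inter> (- C)"
  have 1: "openin (top_of_set (slice m v)) Ob" unfolding Ob_def using \<open>closed C\<close> by (intro openin_open_Int) auto
  have 2: "p \<in> Ob" using p sub unfolding Ob_def C_def by auto
  have 3: "\<forall>q\<in>Ob. \<forall>i<m. q \<in> slice_facet m v i \<longrightarrow> idot b (vtil (v i)) = - v i $ None"
    using b unfolding Ob_def C_def by blast
  have 4: "Ob \<subseteq> slice m v" unfolding Ob_def by blast
  show ?thesis by (rule exI[of _ b], rule exI[of _ Ob]) (use 1 2 3 4 in blast)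
qed

lemma class_rep:
  assumes "x \<in> (torus \<times> S) // R"
  obtains t p where "t \<in> torus" "p \<in> S" "x = R `` {(t, p)}"
  using assms by (auto elim!: quotientE)

lemma circle_lc: "locally_compact_space (top_of_set circle)"
  by (rule compact_imp_locally_compact_space, rule compact_space_subtopology) (simp add: circle_def)

lemma circle_hs: "Hausdorff_space (top_of_set circle)"
  by (simp add: Hausdorff_space_subtopology)

lemma circle_norm: "z \<in> circle \<longleftrightarrow> norm z = 1" by (simp add: circle_def)

lemma sub_top: "S \<subseteq> T \<Longrightarrow> subtopology (top_of_set T) S = top_of_set S"
  by (simp add: subtopology_subtopology Int_absorb1)

context
  fixes m :: nat and v :: "nat \<Rightarrow> int^('k::finite option)"
begin

lemma cont_fd: "continuous_map (top_of_set (torus \<times> slice m v)) (top_of_set (torus \<times> slice m v))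
    (\<lambda>x. (ttil (fst x), snd x))"
  by (auto simp: ttil_torus intro!: continuous_intros ttil_cont)

lemma qM: "quotient_map (top_of_set (torus \<times> slice m v)) (space_M m v) (\<lambda>x. rel_M m v `` {x})"
  unfolding space_M_def by (rule quot_map) (simp add: equivM)

lemma qN: "quotient_map (top_of_set (torus \<times> slice m v)) (space_N m v) (\<lambda>x. rel_N m v `` {x})"
  unfolding space_N_def by (rule quot_map) (simp add: equivN)

lemma tsM: "topspace (space_M m v) = (torus \<times> slice m v) // rel_M m v"
  unfolding space_M_def by (subst quot_topspace) (simp_all add: equivM)

lemma tsN: "topspace (space_N m v) = (torus \<times> slice m v) // rel_N m v"
  unfolding space_N_def by (subst quot_topspace) (simp_all add: equivN)

lemma cont_dq: "continuous_map (top_of_set (torus \<times> slice m v)) (space_N m v)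
    (\<lambda>x. rel_N m v `` {(ttil (fst x), snd x)})"
  using continuous_map_compose[OF cont_fd quotient_imp_continuous_map[OF qN]] by (simp add: o_def)

lemma cont_d: "continuous_map (space_M m v) (space_N m v) (proj_d m v)"
proof (rule continuous_compose_quotient_map[OF qM])
  show "continuous_map (top_of_set (torus \<times> slice m v)) (space_N m v) (proj_d m v \<circ> (\<lambda>x. rel_M m v `` {x}))"
    by (rule continuous_map_eq[OF cont_dq]) (auto simp: d_q)
qed

lemma surj_d: "proj_d m v ` topspace (space_M m v) = topspace (space_N m v)"
proof
  show "proj_d m v ` topspace (space_M m v) \<subseteq> topspace (space_N m v)"
    using continuous_map_image_subset_topspace[OF cont_d] .
  show "topspace (space_N m v) \<subseteq> proj_d m v ` topspace (space_M m v)"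
  proof
    fix y assume "y \<in> topspace (space_N m v)"
    then obtain s p where sp: "s \<in> torus" "p \<in> slice m v" "y = rel_N m v `` {(s, p)}"
      unfolding tsN by (rule class_rep)
    have et: "extv s 1 \<in> torus" using sp by (simp add: extv_torus)
    have "proj_d m v (rel_M m v `` {(extv s 1, p)}) = y" using d_q[OF et sp(2)] sp by simp
    moreover have "rel_M m v `` {(extv s 1, p)} \<in> topspace (space_M m v)"
      unfolding tsM using et sp by (auto intro: quotientI)
    ultimately show "y \<in> proj_d m v ` topspace (space_M m v)" by blast
  qed
qed

lemma cont_act: "continuous_map (prod_topology (top_of_set circle) (space_M m v)) (space_M m v) (\<lambda>(z, x). act_M m v z x)"
proof -
  have Q: "quotient_map (prod_topology (top_of_set circle) (top_of_set (torus \<times> slice m v)))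
      (prod_topology (top_of_set circle) (space_M m v)) (\<lambda>(z, x). (z, rel_M m v `` {x}))"
    by (rule quotient_map_prod_right[OF circle_lc _ qM]) (simp add: circle_hs)
  have g: "continuous_map (top_of_set (circle \<times> (torus \<times> slice m v))) (top_of_set (torus \<times> slice m v))
      (\<lambda>y. (tmul (last_circle (fst y)) (fst (snd y)), snd (snd y)))"
    by (auto simp: tmul_torus lc_torus intro!: continuous_intros tmul_cont lc_cont)
  have c: "continuous_map (top_of_set (circle \<times> (torus \<times> slice m v))) (space_M m v)
      (\<lambda>y. rel_M m v `` {(tmul (last_circle (fst y)) (fst (snd y)), snd (snd y))})"
    using continuous_map_compose[OF g quotient_imp_continuous_map[OF qM]] by (simp add: o_def)
  show ?thesis
  proof (rule continuous_compose_quotient_map[OF Q])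
    show "continuous_map (prod_topology (top_of_set circle) (top_of_set (torus \<times> slice m v))) (space_M m v)
       ((\<lambda>(z, x). act_M m v z x) \<circ> (\<lambda>(z, x). (z, rel_M m v `` {x})))"
      unfolding prod_topology_subtopology_eu
      by (rule continuous_map_eq[OF c]) (auto simp: act_q)
  qed
qed

end

context
  fixes m :: nat and v :: "nat \<Rightarrow> int^('k::finite option)"
begin

lemma local_triv:
  fixes Ob :: "(real^'k) set" and b :: "int^'k"
  assumes Ob: "openin (top_of_set (slice m v)) Ob" "Ob \<subseteq> slice m v"
    and hb: "\<forall>q\<in>Ob. \<forall>i<m. q \<in> slice_facet m v i \<longrightarrow> idot b (vtil (v i)) = - v i $ None"
  defines "U \<equiv> (\<lambda>y. rel_N m v `` {y}) ` (torus \<times> Ob)"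
  shows "\<exists>\<phi>. openin (space_N m v) U \<and>
        homeomorphic_map (subtopology (space_M m v) {x \<in> topspace (space_M m v). proj_d m v x \<in> U})
                         (prod_topology (subtopology (space_N m v) U) (top_of_set circle)) \<phi> \<and>
        (\<forall>x\<in>topspace (space_M m v). proj_d m v x \<in> U \<longrightarrow> fst (\<phi> x) = proj_d m v x) \<and>
        (\<forall>z\<in>circle. \<forall>x\<in>topspace (space_M m v). proj_d m v x \<in> U \<longrightarrow> snd (\<phi> (act_M m v z x)) = z * snd (\<phi> x))"
proof -
  let ?RM = "rel_M m v" and ?RN = "rel_N m v" and ?P = "slice m v"
  let ?E = "space_M m v" and ?B = "space_N m v"
  define W where "W = {x \<in> topspace ?E. proj_d m v x \<in> U}"
  have hq: "\<forall>i<m. q \<in> slice_facet m v i \<longrightarrow> idot b (vtil (v i)) = - v i $ None" if "q \<in> Ob" for q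
    using hb that by blast
  have inU: "?RN `` {(s, q)} \<in> U \<longleftrightarrow> q \<in> Ob" if "s \<in> torus" "q \<in> ?P" for s q
  proof
    assume "?RN `` {(s, q)} \<in> U"
    then obtain s' q' where s'q': "s' \<in> torus" "q' \<in> Ob" "?RN `` {(s, q)} = ?RN `` {(s', q')}"
      unfolding U_def by auto
    then have "((s, q), (s', q')) \<in> ?RN"
      using eq_equiv_class_iff[OF equivN[of m v], of "(s, q)" "(s', q')"] that Ob(2) by auto
    then show "q \<in> Ob" using s'q' by (simp add: relN_iff)
  next
    assume "q \<in> Ob" then show "?RN `` {(s, q)} \<in> U" unfolding U_def using that by blast
  qed
  have preU: "{y \<in> topspace (top_of_set (torus \<times> ?P)). ?RN `` {y} \<in> U} = torus \<times> Ob"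
    using inU Ob(2) by auto
  have Usub: "U \<subseteq> topspace ?B" unfolding U_def tsN using Ob(2) by (auto intro: quotientI)
  have openU: "openin ?B U"
  proof -
    have "openin (top_of_set (torus \<times> ?P)) (torus \<times> Ob)"
      by (rule openin_Times[OF openin_subtopology_self Ob(1)])
    then have o: "openin (top_of_set (torus \<times> ?P)) {y \<in> topspace (top_of_set (torus \<times> ?P)). ?RN `` {y} \<in> U}"
      unfolding preU .
    have "\<forall>U. U \<subseteq> topspace ?B \<longrightarrow> (openin (top_of_set (torus \<times> ?P)) {y \<in> topspace (top_of_set (torus \<times> ?P)). ?RN `` {y} \<in> U} \<longleftrightarrow> openin ?B U)"
      using qN[of m v] unfolding quotient_map_def by (elim conjE) (simp only: mem_Collect_eq)
    then show ?thesis using o Usub by blast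
  qed
  have preW: "{y \<in> topspace (top_of_set (torus \<times> ?P)). ?RM `` {y} \<in> W} = torus \<times> Ob"
  proof -
    have "?RM `` {(t, q)} \<in> topspace ?E" if "t \<in> torus" "q \<in> ?P" for t q
      unfolding tsM using that by (auto intro: quotientI)
    then show ?thesis unfolding W_def using Ob(2) by (auto simp: d_q inU ttil_torus)
  qed
  have openW: "openin ?E W" unfolding W_def by (rule openin_continuous_map_preimage[OF cont_d openU])
  have qM': "quotient_map (top_of_set (torus \<times> Ob)) (subtopology ?E W) (\<lambda>x. ?RM `` {x})"
    using quotient_map_restriction[OF qM preW] openW Ob(2) by (simp add: sub_top subset_iff)
  have qN': "quotient_map (top_of_set (torus \<times> Ob)) (subtopology ?B U) (\<lambda>x. ?RN `` {x})"
    using quotient_map_restriction[OF qN preU] openU Ob(2) by (simp add: sub_top subset_iff)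
  define phi where "phi x = (proj_d m v x, chi (aext b) (fst (SOME y. y \<in> x)))" for x
  define psi where "psi y = (let r = (SOME x. x \<in> fst y) in
       ?RM `` {(extv (fst r) (snd y * inverse (chi b (fst r))), snd r)})" for y
  have phi_q: "phi (?RM `` {(t, q)}) = (?RN `` {(ttil t, q)}, chi (aext b) t)" if "t \<in> torus" "q \<in> Ob" for t q
  proof -
    have qP: "q \<in> ?P" using that Ob(2) by blast
    have ex: "(t, q) \<in> ?RM `` {(t, q)}" using that qP equivM by (auto simp: equiv_def refl_on_def)
    define y where "y = (SOME y. y \<in> ?RM `` {(t, q)})"
    have "y \<in> ?RM `` {(t, q)}" unfolding y_def using ex by (rule someI)
    then obtain t' where y: "y = (t', q)" "t' \<in> torus" "tmul (tinv t) t' \<in> GM m v q"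
      by (cases y) (auto simp: relM_iff)
    have "chi (aext b) (tmul (tinv t) t') = 1" using ker_G[OF hq[OF that(2)] y(3)] .
    moreover have "tmul t (tmul (tinv t) t') = t'"
      using that(1) by (simp add: tmul_def tinv_def vec_eq_iff torus_nz)
    ultimately have "chi (aext b) t' = chi (aext b) t" by (metis chi_mul mult.right_neutral)
    then show ?thesis unfolding phi_def y_def[symmetric] using d_q[OF that(1) qP] y by simp
  qed
  have psi_q: "psi (?RN `` {(s, q)}, z) = ?RM `` {(extv s (z * inverse (chi b s)), q)}"
    if "s \<in> torus" "q \<in> Ob" "z \<in> circle" for s q z
  proof -
    have qP: "q \<in> ?P" using that Ob(2) by blast
    have ex: "(s, q) \<in> ?RN `` {(s, q)}" using that qP equivN by (auto simp: equiv_def refl_on_def)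
    define r where "r = (SOME y. y \<in> ?RN `` {(s, q)})"
    have "r \<in> ?RN `` {(s, q)}" unfolding r_def using ex by (rule someI)
    then obtain s' where r: "r = (s', q)" "s' \<in> torus" "tmul (tinv s) s' \<in> GN m v q"
      by (cases r) (auto simp: relN_iff)
    have zn: "norm z = 1" using that(3) by (simp add: circle_norm)
    have n1: "norm (z * inverse (chi b x)) = 1" if "x \<in> torus" for x
      using chi_norm[OF that] zn by (simp add: norm_mult norm_inverse)
    have "((extv s (z * inverse (chi b s)), q), (extv s' (z * inverse (chi b s')), q)) \<in> ?RM"
      using lift_tmul[OF that(1) r(2) zn, of b] lift_G[OF hq[OF that(2)] r(3)] qP
        extv_torus[OF that(1) n1[OF that(1)]] extv_torus[OF r(2) n1[OF r(2)]]
      by (simp add: relM_iff)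
    then have ceq: "?RM `` {(extv s (z * inverse (chi b s)), q)} = ?RM `` {(extv s' (z * inverse (chi b s')), q)}"
      by (rule class_eqI[OF equivM])
    have "psi (?RN `` {(s, q)}, z) = ?RM `` {(extv (fst r) (z * inverse (chi b (fst r))), snd r)}"
      unfolding psi_def Let_def r_def by (simp only: fst_conv snd_conv)
    then show ?thesis using ceq r by simp
  qed
  have cont_phi: "continuous_map (subtopology ?E W) (prod_topology (subtopology ?B U) (top_of_set circle)) phi"
  proof (rule continuous_compose_quotient_map[OF qM'])
    have c1: "continuous_map (top_of_set (torus \<times> Ob)) (subtopology ?B U) (\<lambda>x. ?RN `` {(ttil (fst x), snd x)})"
      unfolding continuous_map_in_subtopology
    proof
      show "continuous_map (top_of_set (torus \<times> Ob)) ?B (\<lambda>x. ?RN `` {(ttil (fst x), snd x)})"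
        using continuous_map_from_subtopology[OF cont_dq[of m v], of "torus \<times> Ob"] Ob(2)
        by (simp add: sub_top subset_iff)
      show "(\<lambda>x. ?RN `` {(ttil (fst x), snd x)}) \<in> topspace (top_of_set (torus \<times> Ob)) \<rightarrow> U"
        using Ob(2) by (auto simp: inU ttil_torus)
    qed
    have c2: "continuous_map (top_of_set (torus \<times> Ob)) (top_of_set circle) (\<lambda>x. chi (aext b) (fst x))"
      by (auto simp: circle_norm chi_norm intro!: chi_cont_comp continuous_intros)
    show "continuous_map (top_of_set (torus \<times> Ob)) (prod_topology (subtopology ?B U) (top_of_set circle)) (phi \<circ> (\<lambda>x. ?RM `` {x}))"
      by (rule continuous_map_eq[OF continuous_map_pairedI[OF c1 c2]]) (auto simp: phi_q)
  qed
  have cont_psi: "continuous_map (prod_topology (subtopology ?B U) (top_of_set circle)) (subtopology ?E W) psi"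
  proof -
    have Q: "quotient_map (prod_topology (top_of_set (torus \<times> Ob)) (top_of_set circle))
        (prod_topology (subtopology ?B U) (top_of_set circle)) (\<lambda>(x, z). (?RN `` {x}, z))"
      by (rule quotient_map_prod_left[OF circle_lc _ qN']) (simp add: circle_hs)
    have nz: "chi b x \<noteq> 0" if "x \<in> torus" for x using chi_nz[OF that] .
    have g: "continuous_map (top_of_set ((torus \<times> Ob) \<times> circle)) (top_of_set (torus \<times> ?P))
        (\<lambda>y. (extv (fst (fst y)) (snd y * inverse (chi b (fst (fst y)))), snd (fst y)))"
    proof -
      have n1: "norm (z * inverse (chi b x)) = 1" if "x \<in> torus" "z \<in> circle" for x z
        using chi_norm[OF that(1)] that(2) by (simp add: norm_mult norm_inverse circle_norm)
      show ?thesis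
        using Ob(2) by (auto simp: extv_torus n1 nz intro!: continuous_intros extv_cont chi_cont_comp)
    qed
    have c: "continuous_map (top_of_set ((torus \<times> Ob) \<times> circle)) (subtopology ?E W)
        (\<lambda>y. ?RM `` {(extv (fst (fst y)) (snd y * inverse (chi b (fst (fst y)))), snd (fst y))})"
      unfolding continuous_map_in_subtopology
    proof
      show "continuous_map (top_of_set ((torus \<times> Ob) \<times> circle)) ?E
        (\<lambda>y. ?RM `` {(extv (fst (fst y)) (snd y * inverse (chi b (fst (fst y)))), snd (fst y))})"
        using continuous_map_compose[OF g quotient_imp_continuous_map[OF qM]] by (simp add: o_def)
      show "(\<lambda>y. ?RM `` {(extv (fst (fst y)) (snd y * inverse (chi b (fst (fst y)))), snd (fst y))})
          \<in> topspace (top_of_set ((torus \<times> Ob) \<times> circle)) \<rightarrow> W"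
      proof
        fix y :: "((complex^'k) \<times> (real^'k)) \<times> complex" assume "y \<in> topspace (top_of_set ((torus \<times> Ob) \<times> circle))"
        then obtain s q z where y: "y = ((s, q), z)" "s \<in> torus" "q \<in> Ob" "z \<in> circle" by auto
        have "norm (z * inverse (chi b s)) = 1"
          using chi_norm[OF y(2)] y(4) by (simp add: norm_mult norm_inverse circle_norm)
        then have et: "extv s (z * inverse (chi b s)) \<in> torus" by (rule extv_torus[OF y(2)])
        have qP: "q \<in> ?P" using y Ob(2) by blast
        show "?RM `` {(extv (fst (fst y)) (snd y * inverse (chi b (fst (fst y)))), snd (fst y))} \<in> W"
          using preW et qP y by auto
      qed
    qed
    show ?thesis
    proof (rule continuous_compose_quotient_map[OF Q])
      show "continuous_map (prod_topology (top_of_set (torus \<times> Ob)) (top_of_set circle)) (subtopology ?E W)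
          (psi \<circ> (\<lambda>(x, z). (?RN `` {x}, z)))"
        unfolding prod_topology_subtopology_eu
        by (rule continuous_map_eq[OF c]) (auto simp: psi_q)
    qed
  qed
  have tsW: "topspace (subtopology ?E W) = W" unfolding W_def by auto
  have tsP: "topspace (prod_topology (subtopology ?B U) (top_of_set circle)) = U \<times> circle"
    using Usub by auto
  have inv1: "psi (phi x) = x" if "x \<in> W" for x
  proof -
    have "x \<in> topspace ?E" using that W_def by blast
    then obtain t q where tq: "t \<in> torus" "q \<in> ?P" "x = ?RM `` {(t, q)}" unfolding tsM by (rule class_rep)
    have "(t, q) \<in> torus \<times> Ob" using preW that tq by auto
    then have qO: "q \<in> Ob" by simp
    have ct: "chi (aext b) t \<in> circle" using chi_norm[OF tq(1)] by (simp add: circle_norm)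
    have "chi (aext b) t * inverse (chi b (ttil t)) = t $ None"
      using chi_nz[OF ttil_torus[OF tq(1)], of b] by (simp add: chi_aext)
    then show ?thesis using tq qO phi_q[OF tq(1) qO] psi_q[OF ttil_torus[OF tq(1)] qO ct] by (simp add: extv_ttil)
  qed
  have inv2: "phi (psi y) = y" if yin: "y \<in> U \<times> circle" for y
  proof -
    obtain s q z where y: "y = (?RN `` {(s, q)}, z)" "s \<in> torus" "q \<in> Ob" "z \<in> circle"
    proof -
      obtain yy z where yz: "y = (yy, z)" "yy \<in> U" "z \<in> circle" using yin by auto
      then obtain sq where sq: "sq \<in> torus \<times> Ob" "yy = ?RN `` {sq}" unfolding U_def by blast
      obtain s q where "sq = (s, q)" by (cases sq)
      then show ?thesis using that yz sq by blast
    qed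
    have "norm (z * inverse (chi b s)) = 1"
      using chi_norm[OF y(2)] y(4) by (simp add: norm_mult norm_inverse circle_norm)
    then have et: "extv s (z * inverse (chi b s)) \<in> torus" by (rule extv_torus[OF y(2)])
    have "chi (aext b) (extv s (z * inverse (chi b s))) = z"
      using chi_nz[OF y(2), of b] by (simp add: chi_extv)
    then show ?thesis using y psi_q[OF y(2) y(3) y(4)] phi_q[OF et y(3)] by simp
  qed
  have hom: "homeomorphic_map (subtopology ?E W) (prod_topology (subtopology ?B U) (top_of_set circle)) phi"
    by (rule homeomorphic_maps_imp_map[where g=psi]) (simp add: homeomorphic_maps_def cont_phi cont_psi tsW tsP inv1 inv2)
  have fstc: "\<forall>x\<in>topspace ?E. proj_d m v x \<in> U \<longrightarrow> fst (phi x) = proj_d m v x"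
    by (simp add: phi_def)
  have sndc: "\<forall>z\<in>circle. \<forall>x\<in>topspace ?E. proj_d m v x \<in> U \<longrightarrow> snd (phi (act_M m v z x)) = z * snd (phi x)"
  proof (intro ballI impI)
    fix z x assume z: "z \<in> circle" and x: "x \<in> topspace ?E" and dx: "proj_d m v x \<in> U"
    obtain t q where tq: "t \<in> torus" "q \<in> ?P" "x = ?RM `` {(t, q)}" using x unfolding tsM by (rule class_rep)
    have "x \<in> W" using x dx W_def by blast
    then have "(t, q) \<in> torus \<times> Ob" using preW tq by auto
    then have qO: "q \<in> Ob" by simp
    have lt: "tmul (last_circle z) t \<in> torus" using tmul_torus[OF lc_torus[OF z] tq(1)] .
    show "snd (phi (act_M m v z x)) = z * snd (phi x)"
      using act_q[OF z tq(1) tq(2)] tq phi_q[OF lt qO] phi_q[OF tq(1) qO] by (simp add: chi_mul chi_lc)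
  qed
  show ?thesis using openU hom fstc sndc unfolding W_def by blast
qed

end

theorem proposition5p5:
  fixes m :: nat and v :: "nat \<Rightarrow> int^('k::finite option)"
  assumes "CARD('k) \<ge> 2"
    and "good_cone m v"
    and "strictly_convex (pcone m v)"
    and "\<forall>x\<in>pcone m v. x \<noteq> 0 \<longrightarrow> x $ None > 0"
    and "smoothness_criterion m v"
  shows "principal_S1_bundle (space_M m v) (space_N m v) (act_M m v) (proj_d m v)"
  unfolding principal_S1_bundle_def
proof (intro conjI ballI)
  show "continuous_map (space_M m v) (space_N m v) (proj_d m v)" by (rule cont_d)
  show "proj_d m v ` topspace (space_M m v) = topspace (space_N m v)" by (rule surj_d)
  show "continuous_map (prod_topology (top_of_set circle) (space_M m v)) (space_M m v) (\<lambda>(z, x). act_M m v z x)"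
    by (rule cont_act)
  fix x assume x: "x \<in> topspace (space_M m v)"
  then obtain t p where tp: "t \<in> torus" "p \<in> slice m v" "x = rel_M m v `` {(t, p)}"
    unfolding tsM by (rule class_rep)
  have one: "(1::complex) \<in> circle" by (simp add: circle_norm)
  show "act_M m v 1 x = x" using act_q[OF one tp(1) tp(2)] tp(3) by (simp add: lc_one tmul_tone)
  fix z w assume z: "z \<in> circle" and w: "w \<in> circle"
  have zw: "z * w \<in> circle" using z w by (simp add: circle_norm norm_mult)
  have lt: "tmul (last_circle w) t \<in> torus" using tmul_torus[OF lc_torus[OF w] tp(1)] .
  show "act_M m v (z * w) x = act_M m v z (act_M m v w x)"
    using act_q[OF zw tp(1) tp(2)] act_q[OF w tp(1) tp(2)] act_q[OF z lt tp(2)] tp(3)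
    by (simp add: lc_mul tmul_assoc)
next
  fix z x assume z: "z \<in> circle" and x: "x \<in> topspace (space_M m v)"
  then obtain t p where tp: "t \<in> torus" "p \<in> slice m v" "x = rel_M m v `` {(t, p)}"
    unfolding tsM by (elim class_rep)
  have lt: "tmul (last_circle z) t \<in> torus" using tmul_torus[OF lc_torus[OF z] tp(1)] .
  show "proj_d m v (act_M m v z x) = proj_d m v x"
    using act_q[OF z tp(1) tp(2)] d_q[OF lt tp(2)] d_q[OF tp(1) tp(2)] tp(3) by (simp add: ttil_lc)
next
  fix bb assume bb: "bb \<in> topspace (space_N m v)"
  then obtain s p where sp: "s \<in> torus" "p \<in> slice m v" "bb = rel_N m v `` {(s, p)}"
    unfolding tsN by (rule class_rep)
  obtain b Ob where Ob: "p \<in> Ob" "openin (top_of_set (slice m v)) Ob" "Ob \<subseteq> slice m v"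
    "\<forall>q\<in>Ob. \<forall>i<m. q \<in> slice_facet m v i \<longrightarrow> idot b (vtil (v i)) = - v i $ None"
    using local_b[OF assms(1,2,4,5) sp(2)] by blast
  define U where "U = (\<lambda>y. rel_N m v `` {y}) ` (torus \<times> Ob)"
  obtain \<phi> where
    "openin (space_N m v) U \<and>
        homeomorphic_map (subtopology (space_M m v) {x \<in> topspace (space_M m v). proj_d m v x \<in> U})
                         (prod_topology (subtopology (space_N m v) U) (top_of_set circle)) \<phi> \<and>
        (\<forall>x\<in>topspace (space_M m v). proj_d m v x \<in> U \<longrightarrow> fst (\<phi> x) = proj_d m v x) \<and>
        (\<forall>z\<in>circle. \<forall>x\<in>topspace (space_M m v). proj_d m v x \<in> U \<longrightarrow> snd (\<phi> (act_M m v z x)) = z * snd (\<phi> x))"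
    using local_triv[OF Ob(2,3,4)] unfolding U_def by blast
  moreover have "bb \<in> U" unfolding U_def using sp Ob(1) by blast
  ultimately show "\<exists>U \<phi>. openin (space_N m v) U \<and> bb \<in> U \<and>
        homeomorphic_map (subtopology (space_M m v) {x \<in> topspace (space_M m v). proj_d m v x \<in> U})
                         (prod_topology (subtopology (space_N m v) U) (top_of_set circle)) \<phi> \<and>
        (\<forall>x\<in>topspace (space_M m v). proj_d m v x \<in> U \<longrightarrow> fst (\<phi> x) = proj_d m v x) \<and>
        (\<forall>z\<in>circle. \<forall>x\<in>topspace (space_M m v). proj_d m v x \<in> U \<longrightarrow> snd (\<phi> (act_M m v z x)) = z * snd (\<phi> x))"
    by blast
qed

end
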